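(* Let $A_n=S_n\wr \mathrm{Aut}(\mathcal{T}_d)$ with the cloning maps $\kappa_k^n$ described in the context, and let $\mathscr{T}(S_*\wr\mathrm{Aut}(\mathcal{T}_d))$ be the set of equivalence classes $[T_-,f,T_+]$ of triples described in the context, with the multiplication described there. Then $\mathscr{T}(S_*\wr\mathrm{Aut}(\mathcal{T}_d))$ is a group, and the map $[T_-,f,T_+]\mapsto ((T_-,f,T_+))$ is a well-defined group isomorphism $\mathscr{T}(S_*\wr\mathrm{Aut}(\mathcal{T}_d))\cong \mathrm{AAut}(\mathcal{T}_d)$.
   Context: Fix $d\ge 2$ and the alphabet $X=\{1,\dots,d\}$; $\mathcal{T}_d$ is the infinite rooted $d$-ary tree with vertex set the set $X^*$ of finite words (root the empty word, $u$ adjacent to $ux$ for $x\in X$), and $\partial\mathcal{T}_d$ its boundary (infinite words). Permutations act on the left, and $\sigma\tau$ means first $\tau$ then $\sigma$. For a group $G$, $S_n\wr G=S_n\ltimes G^n$ with elements written $\sigma(g_1,\dots,g_n)$ and multiplication $\sigma(f_1,\dots,f_n)\,\tau(g_1,\dots,g_n)=\sigma\tau(f_{\tau(1)}g_1,\dots,f_{\tau(n)}g_n)$. Every $f\in\mathrm{Aut}(\mathcal{T}_d)$ has a unique wreath recursion $f=\rho(f)(f_1,\dots,f_d)$, where $\rho(f)\in S_d$ and $f_x\in\mathrm{Aut}(\mathcal{T}_d)$ (the state of $f$ at $x$) satisfy $f(xw)=\rho(f)(x)\,f_x(w)$ for $x\in X$, $w\in X^*$. Almost-automorphisms: a finite rooted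 complete subtree of $\mathcal{T}_d$ is a finite subtree containing the root in which each vertex has either $0$ or all $d$ of its children; its leaves are ordered left to right (lexicographically). If $T_-,T_+$ are such subtrees each with $n$ leaves ($u_1,\dots,u_n$ the leaves of $T_-$, $v_1,\dots,v_n$ those of $T_+$), $\sigma\in S_n$, $f_i\in\mathrm{Aut}(\mathcal{T}_d)$, then $((T_-,\sigma(f_1,\dots,f_n),T_+))$ denotes the homeomorphism of $\partial\mathcal{T}_d$ sending $v_iw\mapsto u_{\sigma(i)}f_i(w)$. $\mathrm{AAut}(\mathcal{T}_d)$ is the group of all such homeomorphisms. Symmetric cloning maps: for $1\le k\le n$ and $\sigma\in S_n$, $(\sigma)\varsigma_k^n\in S_{n+d-1}$ is defined by: for $i<k$, $i\mapsto\sigma(i)$ if $\sigma(i)<\sigma(k)$ and $i\mapsto\sigma(i)+d-1$ if $\sigma(i)>\sigma(k)$; for $k\le i\le k+d-1$, $i\mapsto \sigma(k)+i-k$; for $i>k+d-1$, $i\mapsto\sigma(i-d+1)$ if $\sigma(i-d+1)<\sigma(k)$ and $i\mapsto \sigma(i-d+1)+d-1$ if $\sigma(i-d+1)>\sigma(k)$. For $\tau\in S_d$ let $\tau^{(k)}\in S_{n+d-1}$ be the permutation sending $k+j-1\mapsto k+\tau(j)-1$ for $1\le j\le d$ and fixing all other points. Define $\rho_n(\sigma(f_1,\dots,f_n))=\sigma$ and $\kappa_k^n:A_n\to A_{n+d-1}$ by $(\sigma(f_1,\dots,f_n))\kappa_k^n=(\sigma)\varsigma_k^n\,\rho(f_k)^{(k)}\,(f_1,\dots,f_{k-1},f_k^1,\dots,f_k^d,f_{k+1},\dots,f_n)$,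 where $f_k=\rho(f_k)(f_k^1,\dots,f_k^d)$ is the wreath recursion. Thompson group $\mathscr{T}(S_*\wr G)$ for $G\le\mathrm{Aut}(\mathcal{T}_d)$ with $\kappa_k^n(S_n\wr G)\subseteq S_{n+d-1}\wr G$: consider triples $(T_-,g,T_+)$ with $T_\pm$ finite rooted complete subtrees of $\mathcal{T}_d$ with the same number $n$ of leaves and $g\in S_n\wr G$. An expansion of $(T_-,g,T_+)$ is $(T_-',(g)\kappa_k^n,T_+')$ where $T_+'$ is $T_+$ with a $d$-caret (the $d$ children) added at its $k$th leaf and $T_-'$ is $T_-$ with a $d$-caret added at its $\rho_n(g)(k)$th leaf; reductions are the inverses. $[T_-,g,T_+]$ denotes the class under the equivalence relation generated by expansions. The product of two classes is computed by choosing representatives $(T_-,f,T_+)$, $(U_-,g,U_+)$ with $T_+=U_-$ (always possible by expanding) and setting $[T_-,f,T_+][U_-,g,U_+]=[T_-,fg,U_+]$. *)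

theory Defs
  imports "HOL-Algebra.Group" "HOL-Combinatorics.Permutations" "HOL-Library.List_Lexorder"
begin

definition words :: "nat \<Rightarrow> nat list set" where
  "words d = {w. set w \<subseteq> {1..d}}"

definition tree_adj :: "nat list \<Rightarrow> nat list \<Rightarrow> bool" where
  "tree_adj u v \<longleftrightarrow> (\<exists>x. v = u @ [x]) \<or> (\<exists>x. u = v @ [x])"

text \<open>Automorphisms of the rooted tree T_d, represented extensionally as
  maps on all lists that are the identity outside the vertex set.\<close>
definition tree_aut :: "nat \<Rightarrow> (nat list \<Rightarrow> nat list) \<Rightarrow> bool" where
  "tree_aut d f \<longleftrightarrow> bij_betw f (words d) (words d) \<and> f [] = []
     \<and> (\<forall>u\<in>words d. \<forall>v\<in>words d. tree_adj u v \<longleftrightarrow> tree_adj (f u) (f v))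
     \<and> (\<forall>w. w \<notin> words d \<longrightarrow> f w = w)"

text \<open>Wreath recursion f = rho(f) (f_1,...,f_d): f(x w) = rho(f)(x) f_x(w).\<close>
definition aut_rho :: "nat \<Rightarrow> (nat list \<Rightarrow> nat list) \<Rightarrow> nat \<Rightarrow> nat" where
  "aut_rho d f x = (if x \<in> {1..d} then hd (f [x]) else x)"

definition aut_state :: "(nat list \<Rightarrow> nat list) \<Rightarrow> nat \<Rightarrow> nat list \<Rightarrow> nat list" where
  "aut_state f x = (\<lambda>w. tl (f (x # w)))"

definition complete_subtree :: "nat \<Rightarrow> nat list set \<Rightarrow> bool" where
  "complete_subtree d T \<longleftrightarrow> finite T \<and> [] \<in> T \<and> T \<subseteq> words d
     \<and> (\<forall>u x. u @ [x] \<in> T \<longrightarrow> u \<in> T)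
     \<and> (\<forall>u\<in>T. (\<forall>x\<in>{1..d}. u @ [x] \<notin> T) \<or> (\<forall>x\<in>{1..d}. u @ [x] \<in> T))"

definition leaves :: "nat \<Rightarrow> nat list set \<Rightarrow> nat list set" where
  "leaves d T = {u \<in> T. \<forall>x\<in>{1..d}. u @ [x] \<notin> T}"

definition nleaves :: "nat \<Rightarrow> nat list set \<Rightarrow> nat" where
  "nleaves d T = card (leaves d T)"

text \<open>The i-th leaf (1-based) in left-to-right = lexicographic order.\<close>
definition leaf :: "nat \<Rightarrow> nat list set \<Rightarrow> nat \<Rightarrow> nat list" where
  "leaf d T i = sorted_list_of_set (leaves d T) ! (i - 1)"

definition add_caret :: "nat \<Rightarrow> nat list set \<Rightarrow> nat list \<Rightarrow> nat list set" where
  "add_caret d T u = T \<union> {u @ [x] |x. x \<in> {1..d}}"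

type_synonym wr_elt = "(nat \<Rightarrow> nat) \<times> (nat \<Rightarrow> nat list \<Rightarrow> nat list)"

text \<open>Elements sigma(f_1,...,f_n); the coordinates f_i for i outside {1..n}
  are normalised to id.  Product: sigma(f) tau(g) = sigma tau (f_{tau(i)} g_i).\<close>
definition wr_mult :: "nat \<Rightarrow> wr_elt \<Rightarrow> wr_elt \<Rightarrow> wr_elt" where
  "wr_mult n a b = (case a of (\<sigma>, f) \<Rightarrow> case b of (\<tau>, g) \<Rightarrow>
     (\<sigma> \<circ> \<tau>, \<lambda>i. if i \<in> {1..n} then f (\<tau> i) \<circ> g i else id))"

definition clone_perm :: "nat \<Rightarrow> nat \<Rightarrow> nat \<Rightarrow> (nat \<Rightarrow> nat) \<Rightarrow> nat \<Rightarrow> nat" where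
  "clone_perm d n k \<sigma> i =
    (if 1 \<le> i \<and> i < k then (if \<sigma> i < \<sigma> k then \<sigma> i else \<sigma> i + d - 1)
     else if k \<le> i \<and> i \<le> k + d - 1 then \<sigma> k + i - k
     else if k + d - 1 < i \<and> i \<le> n + d - 1 then
       (if \<sigma> (i - d + 1) < \<sigma> k then \<sigma> (i - d + 1) else \<sigma> (i - d + 1) + d - 1)
     else i)"

definition local_perm :: "nat \<Rightarrow> nat \<Rightarrow> (nat \<Rightarrow> nat) \<Rightarrow> nat \<Rightarrow> nat" where
  "local_perm d k \<tau> i = (if k \<le> i \<and> i \<le> k + d - 1 then k + \<tau> (i - k + 1) - 1 else i)"

definition kappa :: "nat \<Rightarrow> nat \<Rightarrow> nat \<Rightarrow> wr_elt \<Rightarrow> wr_elt" where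
  "kappa d n k g = (case g of (\<sigma>, fs) \<Rightarrow>
     (clone_perm d n k \<sigma> \<circ> local_perm d k (aut_rho d (fs k)),
      \<lambda>i. if 1 \<le> i \<and> i < k then fs i
          else if k \<le> i \<and> i \<le> k + d - 1 then aut_state (fs k) (i - k + 1)
          else if k + d - 1 < i \<and> i \<le> n + d - 1 then fs (i - d + 1)
          else id))"

type_synonym triple = "nat list set \<times> wr_elt \<times> nat list set"

definition triple_ok :: "nat \<Rightarrow> triple \<Rightarrow> bool" where
  "triple_ok d t = (case t of (Tm, (\<sigma>, fs), Tp) \<Rightarrow>
     complete_subtree d Tm \<and> complete_subtree d Tp \<and> nleaves d Tm = nleaves d Tp
     \<and> \<sigma> permutes {1..nleaves d Tp}
     \<and> (\<forall>i\<in>{1..nleaves d Tp}. tree_aut d (fs i))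
     \<and> (\<forall>i. i \<notin> {1..nleaves d Tp} \<longrightarrow> fs i = id))"

definition expansion :: "nat \<Rightarrow> triple \<Rightarrow> triple \<Rightarrow> bool" where
  "expansion d t t' \<longleftrightarrow> triple_ok d t \<and>
     (case t of (Tm, g, Tp) \<Rightarrow>
       \<exists>k\<in>{1..nleaves d Tp}.
          t' = (add_caret d Tm (leaf d Tm (fst g k)),
                kappa d (nleaves d Tp) k g,
                add_caret d Tp (leaf d Tp k)))"

definition tclass :: "nat \<Rightarrow> triple \<Rightarrow> triple set" where
  "tclass d t = {t'. equivclp (expansion d) t t'}"

definition tmult :: "nat \<Rightarrow> triple set \<Rightarrow> triple set \<Rightarrow> triple set" where
  "tmult d X Y = (SOME Z. \<exists>Tm f T g Tp. (Tm, f, T) \<in> X \<and> (T, g, Tp) \<in> Y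
       \<and> Z = tclass d (Tm, wr_mult (nleaves d T) f g, Tp))"

definition Thompson :: "nat \<Rightarrow> triple set monoid" where
  "Thompson d = \<lparr>carrier = {tclass d t |t. triple_ok d t},
                 monoid.mult = tmult d,
                 one = tclass d ({[]}, (id, \<lambda>i. id), {[]})\<rparr>"

definition boundary :: "nat \<Rightarrow> (nat \<Rightarrow> nat) set" where
  "boundary d = {\<xi>. \<forall>k. \<xi> k \<in> {1..d}}"

definition is_prefix :: "nat list \<Rightarrow> (nat \<Rightarrow> nat) \<Rightarrow> bool" where
  "is_prefix v \<xi> \<longleftrightarrow> (\<forall>j<length v. \<xi> j = v ! j)"

definition conc :: "nat list \<Rightarrow> (nat \<Rightarrow> nat) \<Rightarrow> nat \<Rightarrow> nat" where
  "conc v w = (\<lambda>k. if k < length v then v ! k else w (k - length v))"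

definition sdrop :: "nat \<Rightarrow> (nat \<Rightarrow> nat) \<Rightarrow> nat \<Rightarrow> nat" where
  "sdrop m \<xi> = (\<lambda>k. \<xi> (k + m))"

definition aut_bd :: "(nat list \<Rightarrow> nat list) \<Rightarrow> (nat \<Rightarrow> nat) \<Rightarrow> nat \<Rightarrow> nat" where
  "aut_bd f \<xi> = (\<lambda>k. f (map \<xi> [0..<Suc k]) ! k)"

text \<open>((T_-, sigma(f_1..f_n), T_+)): v_i w maps to u_{sigma(i)} f_i(w) on the boundary,
  extended by the identity off the boundary.\<close>
definition aa :: "nat \<Rightarrow> triple \<Rightarrow> (nat \<Rightarrow> nat) \<Rightarrow> nat \<Rightarrow> nat" where
  "aa d t \<xi> = (case t of (Tm, (\<sigma>, fs), Tp) \<Rightarrow>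
     if \<xi> \<in> boundary d then
       (let i = (THE i. i \<in> {1..nleaves d Tp} \<and> is_prefix (leaf d Tp i) \<xi>)
        in conc (leaf d Tm (\<sigma> i)) (aut_bd (fs i) (sdrop (length (leaf d Tp i)) \<xi>)))
     else \<xi>)"

definition AAut :: "nat \<Rightarrow> ((nat \<Rightarrow> nat) \<Rightarrow> nat \<Rightarrow> nat) set" where
  "AAut d = {aa d (Tm, (\<sigma>, fs), Tp) |Tm \<sigma> fs Tp.
      complete_subtree d Tm \<and> complete_subtree d Tp \<and> nleaves d Tm = nleaves d Tp
      \<and> \<sigma> permutes {1..nleaves d Tp} \<and> (\<forall>i\<in>{1..nleaves d Tp}. tree_aut d (fs i))}"

definition AAutG :: "nat \<Rightarrow> ((nat \<Rightarrow> nat) \<Rightarrow> nat \<Rightarrow> nat) monoid" where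
  "AAutG d = \<lparr>carrier = AAut d, monoid.mult = (\<circ>), one = id\<rparr>"

end

theory Submission
  imports Defs
begin

section \<open>Words and tree automorphisms\<close>

lemma words_Nil[simp]: "[] \<in> words d" by (simp add: words_def)
lemma words_Cons[simp]: "x # w \<in> words d \<longleftrightarrow> x \<in> {1..d} \<and> w \<in> words d"
  by (auto simp add: words_def)
lemma words_append[simp]: "u @ v \<in> words d \<longleftrightarrow> u \<in> words d \<and> v \<in> words d"
  by (auto simp add: words_def)
lemma words_nth: "w \<in> words d \<Longrightarrow> i < length w \<Longrightarrow> w ! i \<in> {1..d}"
  using nth_mem[of i w] subsetD unfolding words_def by (metis mem_Collect_eq)

lemma tree_adj_Cons: "tree_adj (a # u) (a # v) \<longleftrightarrow> tree_adj u v"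
  by (auto simp add: tree_adj_def)

lemma tree_aut_id: "tree_aut d id"
  by (simp add: tree_aut_def)

lemma tree_aut_bij: "tree_aut d f \<Longrightarrow> bij_betw f (words d) (words d)"
  by (simp add: tree_aut_def)

lemma tree_aut_words: "tree_aut d f \<Longrightarrow> w \<in> words d \<Longrightarrow> f w \<in> words d"
  using bij_betw_apply[OF tree_aut_bij] by blast

lemma tree_aut_inj: "tree_aut d f \<Longrightarrow> u \<in> words d \<Longrightarrow> v \<in> words d \<Longrightarrow> f u = f v \<Longrightarrow> u = v"
  using tree_aut_bij[of d f] unfolding bij_betw_def inj_on_def by blast

lemma tree_aut_adj: "tree_aut d f \<Longrightarrow> u \<in> words d \<Longrightarrow> v \<in> words d \<Longrightarrow> tree_adj (f u) (f v) = tree_adj u v"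
  by (simp add: tree_aut_def)

lemma tree_aut_out: "tree_aut d f \<Longrightarrow> w \<notin> words d \<Longrightarrow> f w = w"
  by (simp add: tree_aut_def)

lemma tree_aut_Nil: "tree_aut d f \<Longrightarrow> f [] = []"
  by (simp add: tree_aut_def)

lemma tree_aut_length_aux:
  assumes f: "tree_aut d f"
  shows "w \<in> words d \<Longrightarrow> length (f w) = length w"
proof (induction "length w" arbitrary: w rule: less_induct)
  case less
  show ?case
  proof (cases w rule: rev_cases)
    case Nil then show ?thesis using tree_aut_Nil[OF f] by simp
  next
    case (snoc u x)
    have u: "u \<in> words d" using less.prems snoc by simp
    have lu: "length (f u) = length u" using less.hyps[of u] u snoc by simp
    have "tree_adj u w" using snoc by (auto simp: tree_adj_def)
    then have "tree_adj (f u) (f w)" using tree_aut_adj[OF f u less(2)] by simp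
    then consider y where "f w = f u @ [y]" | y where "f u = f w @ [y]" by (auto simp: tree_adj_def)
    then show ?thesis
    proof cases
      case 1 then show ?thesis using lu snoc by simp
    next
      case (2 y)
      show ?thesis
      proof (cases u rule: rev_cases)
        case Nil then show ?thesis using lu 2 by simp
      next
        case (snoc p z)
        have p: "p \<in> words d" using u snoc by auto
        have lp: "length (f p) = length p" using less.hyps[of p] p snoc \<open>w = u @ [x]\<close> by simp
        have "tree_adj p u" using snoc by (auto simp: tree_adj_def)
        then have "tree_adj (f p) (f u)" using tree_aut_adj[OF f p u] by simp
        then consider y' where "f u = f p @ [y']" | y' where "f p = f u @ [y']" by (auto simp: tree_adj_def)
        then have "f p = f w"
        proof cases
          case 1 then show ?thesis using 2 by simp
        next
          case 3: 2 then have False using lp lu snoc by simp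
          then show ?thesis ..
        qed
        then have "p = w" using tree_aut_inj[OF f p less(2)] by simp
        then show ?thesis using snoc \<open>w = u @ [x]\<close> by simp
      qed
    qed
  qed
qed

lemma tree_aut_length: "tree_aut d f \<Longrightarrow> w \<in> words d \<Longrightarrow> length (f w) = length w"
  using tree_aut_length_aux by blast


lemma tree_aut_snoc:
  assumes f: "tree_aut d f" and w: "u @ [x] \<in> words d"
  shows "\<exists>y. f (u @ [x]) = f u @ [y]"
proof -
  have u: "u \<in> words d" using w by simp
  have "tree_adj u (u @ [x])" by (auto simp: tree_adj_def)
  then have "tree_adj (f u) (f (u @ [x]))" using tree_aut_adj[OF f u w] by simp
  moreover have "length (f (u @ [x])) = Suc (length (f u))"
    using tree_aut_length[OF f u] tree_aut_length[OF f w] by simp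
  ultimately show ?thesis by (auto simp: tree_adj_def)
qed

lemma tree_aut_prefix:
  assumes f: "tree_aut d f" and w: "u @ v \<in> words d"
  shows "take (length u) (f (u @ v)) = f u"
  using w
proof (induction v rule: rev_induct)
  case Nil
  then show ?case using tree_aut_length[OF f, of u] by simp
next
  case (snoc x v)
  have w1: "u @ v \<in> words d" using snoc.prems by simp
  obtain y where "f ((u @ v) @ [x]) = f (u @ v) @ [y]"
    using tree_aut_snoc[OF f, of "u @ v" x] snoc.prems by auto
  moreover have "length (f (u @ v)) = length u + length v" using tree_aut_length[OF f w1] by simp
  ultimately show ?case using snoc.IH[OF w1] by simp
qed

lemma tree_aut_single:
  assumes f: "tree_aut d f" and x: "x \<in> {1..d}"
  shows "f [x] = [aut_rho d f x]" "aut_rho d f x \<in> {1..d}"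
proof -
  have xw: "[x] \<in> words d" using x by simp
  have "length (f [x]) = 1" using tree_aut_length[OF f xw] by simp
  then obtain y where y: "f [x] = [y]" by (metis One_nat_def length_0_conv length_Suc_conv)
  then show "f [x] = [aut_rho d f x]" using x by (simp add: aut_rho_def)
  have "f [x] \<in> words d" using tree_aut_words[OF f xw] .
  then show "aut_rho d f x \<in> {1..d}" using y x by (simp add: aut_rho_def)
qed

lemma aut_rho_inj:
  assumes f: "tree_aut d f" and x: "x \<in> {1..d}" and y: "y \<in> {1..d}"
    and eq: "aut_rho d f x = aut_rho d f y"
  shows "x = y"
proof -
  have "f [x] = f [y]" using tree_aut_single[OF f x] tree_aut_single[OF f y] eq by simp
  then show ?thesis using tree_aut_inj[OF f, of "[x]" "[y]"] x y by simp
qed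

lemma aut_rho_permutes:
  assumes f: "tree_aut d f"
  shows "aut_rho d f permutes {1..d}"
proof (rule bij_imp_permutes)
  have inj: "inj_on (aut_rho d f) {1..d}"
    using aut_rho_inj[OF f] by (meson inj_onI)
  moreover have "aut_rho d f ` {1..d} \<subseteq> {1..d}" using tree_aut_single(2)[OF f] by auto
  ultimately have "aut_rho d f ` {1..d} = {1..d}" using endo_inj_surj[of "{1..d}"] by simp
  then show "bij_betw (aut_rho d f) {1..d} {1..d}" using inj by (simp add: bij_betw_def)
  show "x \<notin> {1..d} \<Longrightarrow> aut_rho d f x = x" for x unfolding aut_rho_def by presburger
qed

lemma tree_aut_Cons:
  assumes f: "tree_aut d f" and x: "x \<in> {1..d}" and w: "w \<in> words d"
  shows "f (x # w) = aut_rho d f x # aut_state f x w"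
proof -
  have xw: "[x] @ w \<in> words d" using x w by simp
  have "take 1 (f ([x] @ w)) = [aut_rho d f x]"
    using tree_aut_prefix[OF f xw] tree_aut_single[OF f x] by simp
  moreover have "length (f (x # w)) = Suc (length w)" using tree_aut_length[OF f] xw by simp
  ultimately show ?thesis unfolding aut_state_def
    by (cases "f (x # w)") auto
qed

lemma aut_state_out:
  assumes f: "tree_aut d f" and w: "w \<notin> words d"
  shows "aut_state f x w = w"
proof -
  have "x # w \<notin> words d" using w by simp
  then show ?thesis using tree_aut_out[OF f] by (simp add: aut_state_def)
qed

lemma aut_state_words:
  assumes f: "tree_aut d f" and x: "x \<in> {1..d}" and w: "w \<in> words d"
  shows "aut_state f x w \<in> words d"
proof -
  have "f (x # w) \<in> words d" using tree_aut_words[OF f] x w by simp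
  then show ?thesis using tree_aut_Cons[OF f x w] by simp
qed

lemma tree_aut_state:
  assumes f: "tree_aut d f" and x: "x \<in> {1..d}"
  shows "tree_aut d (aut_state f x)"
proof -
  let ?g = "aut_state f x"
  have inj: "inj_on ?g (words d)"
  proof (rule inj_onI)
    fix u v assume u: "u \<in> words d" and v: "v \<in> words d" and e: "?g u = ?g v"
    then have "f (x # u) = f (x # v)" using tree_aut_Cons[OF f x] by simp
    then show "u = v" using tree_aut_inj[OF f, of "x#u" "x#v"] u v x by simp
  qed
  have sub: "?g ` words d \<subseteq> words d" using aut_state_words[OF f x] by auto
  have sup: "words d \<subseteq> ?g ` words d"
  proof
    fix w' assume w': "w' \<in> words d"
    have "aut_rho d f x # w' \<in> words d" using w' tree_aut_single(2)[OF f x] by simp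
    then obtain z where z: "z \<in> words d" "f z = aut_rho d f x # w'"
      using tree_aut_bij[OF f] unfolding bij_betw_def by (metis imageE)
    then obtain y w where zw: "z = y # w" using tree_aut_Nil[OF f] by (cases z) auto
    have y: "y \<in> {1..d}" and w: "w \<in> words d" using z zw by auto
    have "aut_rho d f y = aut_rho d f x" "aut_state f y w = w'"
      using tree_aut_Cons[OF f y w] z zw by auto
    then have "y = x" using aut_rho_inj[OF f y x] by simp
    then show "w' \<in> ?g ` words d" using \<open>aut_state f y w = w'\<close> w by blast
  qed
  have adj: "tree_adj u v \<longleftrightarrow> tree_adj (?g u) (?g v)" if u: "u \<in> words d" and v: "v \<in> words d" for u v
  proof -
    have "tree_adj u v \<longleftrightarrow> tree_adj (x # u) (x # v)" by (simp add: tree_adj_Cons)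
    also have "\<dots> \<longleftrightarrow> tree_adj (f (x # u)) (f (x # v))" using tree_aut_adj[OF f, of "x#u" "x#v"] u v x by simp
    also have "\<dots> \<longleftrightarrow> tree_adj (?g u) (?g v)" using tree_aut_Cons[OF f x] u v by (simp add: tree_adj_Cons)
    finally show ?thesis .
  qed
  have nil: "?g [] = []" using tree_aut_Cons[OF f x, of "[]"] tree_aut_single[OF f x] by simp
  have bij: "bij_betw ?g (words d) (words d)" using inj sub sup by (simp add: bij_betw_def)
  show ?thesis unfolding tree_aut_def
  proof (intro conjI ballI allI impI)
    show "bij_betw ?g (words d) (words d)" by (fact bij)
    show "?g [] = []" by (fact nil)
    show "tree_adj u v = tree_adj (?g u) (?g v)" if "u \<in> words d" "v \<in> words d" for u v
      using adj that by simp
    show "?g w = w" if "w \<notin> words d" for w using aut_state_out[OF f that] .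
  qed
qed

lemma tree_aut_comp:
  assumes f: "tree_aut d f" and g: "tree_aut d g"
  shows "tree_aut d (f \<circ> g)"
  unfolding tree_aut_def
proof (intro conjI ballI allI impI)
  show "bij_betw (f \<circ> g) (words d) (words d)"
    using bij_betw_trans[OF tree_aut_bij[OF g] tree_aut_bij[OF f]] .
  show "(f \<circ> g) [] = []" using f g by (simp add: tree_aut_Nil)
  show "tree_adj u v = tree_adj ((f \<circ> g) u) ((f \<circ> g) v)" if "u \<in> words d" "v \<in> words d" for u v
    using that tree_aut_adj[OF f] tree_aut_adj[OF g] tree_aut_words[OF g] by simp
  show "(f \<circ> g) w = w" if "w \<notin> words d" for w using that tree_aut_out[OF f] tree_aut_out[OF g] by simp
qed

definition finv :: "nat \<Rightarrow> (nat list \<Rightarrow> nat list) \<Rightarrow> nat list \<Rightarrow> nat list" where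
  "finv d f = (\<lambda>w. if w \<in> words d then inv_into (words d) f w else w)"

lemma finv_comp:
  assumes f: "tree_aut d f"
  shows "finv d f \<circ> f = id"
proof
  fix w
  show "(finv d f \<circ> f) w = id w"
  proof (cases "w \<in> words d")
    case True
    then show ?thesis using f tree_aut_words[OF f True] unfolding finv_def tree_aut_def bij_betw_def
      by (simp add: inv_into_f_f)
  next
    case False
    then show ?thesis using tree_aut_out[OF f False] by (simp add: finv_def)
  qed
qed

lemma tree_aut_finv:
  assumes f: "tree_aut d f"
  shows "tree_aut d (finv d f)"
proof -
  have b: "bij_betw f (words d) (words d)" using f by (simp add: tree_aut_def)
  have bi: "bij_betw (inv_into (words d) f) (words d) (words d)" using bij_betw_inv_into[OF b] .
  have fg: "f (finv d f w) = w" if "w \<in> words d" for w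
    using that b by (simp add: finv_def bij_betw_inv_into_right)
  have gw: "finv d f w \<in> words d" if "w \<in> words d" for w
    using that bi by (simp add: finv_def bij_betw_apply)
  show ?thesis unfolding tree_aut_def
  proof (intro conjI ballI allI impI)
    show "bij_betw (finv d f) (words d) (words d)"
      using bi by (rule bij_betw_cong[THEN iffD1, rotated]) (simp add: finv_def)
    show "finv d f [] = []" using finv_comp[OF f] tree_aut_Nil[OF f]
      by (metis comp_apply id_apply)
    show "tree_adj u v = tree_adj (finv d f u) (finv d f v)" if "u \<in> words d" "v \<in> words d" for u v
      using tree_aut_adj[OF f gw gw, of u v] fg that by simp
    show "finv d f w = w" if "w \<notin> words d" for w using that by (simp add: finv_def)
  qed
qed

section \<open>Boundary\<close>

lemma map_upt_Suc_Cons: "map \<xi> [0..<Suc k] = \<xi> 0 # map (\<lambda>i. \<xi> (Suc i)) [0..<k]"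
  by (induction k) auto

lemma boundary_map: "\<xi> \<in> boundary d \<Longrightarrow> map \<xi> [0..<m] \<in> words d"
  by (auto simp: boundary_def words_def)

lemma conc_boundary: "v \<in> words d \<Longrightarrow> w \<in> boundary d \<Longrightarrow> conc v w \<in> boundary d"
  using words_nth[of v d] by (auto simp: boundary_def conc_def)

lemma sdrop_boundary: "\<xi> \<in> boundary d \<Longrightarrow> sdrop m \<xi> \<in> boundary d"
  by (auto simp: boundary_def sdrop_def)

lemma is_prefix_conc: "is_prefix v (conc v w)"
  by (simp add: is_prefix_def conc_def)

lemma sdrop_conc: "sdrop (length v) (conc v w) = w"
  by (simp add: sdrop_def conc_def)

lemma conc_sdrop: "is_prefix v \<xi> \<Longrightarrow> conc v (sdrop (length v) \<xi>) = \<xi>"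
  by (auto simp: is_prefix_def conc_def sdrop_def fun_eq_iff)

lemma conc_append: "conc (u @ v) w = conc u (conc v w)"
  by (auto simp: conc_def fun_eq_iff nth_append)

lemma conc_Nil[simp]: "conc [] w = w"
  by (simp add: conc_def)

lemma aut_bd_map:
  assumes f: "tree_aut d f" and xi: "\<xi> \<in> boundary d"
  shows "f (map \<xi> [0..<m]) = map (aut_bd f \<xi>) [0..<m]"
proof (induction m)
  case 0 then show ?case using tree_aut_Nil[OF f] by simp
next
  case (Suc m)
  have w: "map \<xi> [0..<m] @ [\<xi> m] \<in> words d" using boundary_map[OF xi, of "Suc m"] by simp
  obtain y where y: "f (map \<xi> [0..<m] @ [\<xi> m]) = f (map \<xi> [0..<m]) @ [y]"
    using tree_aut_snoc[OF f w] by blast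
  have "aut_bd f \<xi> m = y" unfolding aut_bd_def using y Suc by (simp add: nth_append)
  then show ?case using y Suc by simp
qed

lemma aut_bd_boundary:
  assumes f: "tree_aut d f" and xi: "\<xi> \<in> boundary d"
  shows "aut_bd f \<xi> \<in> boundary d"
  unfolding boundary_def
proof (intro CollectI allI)
  fix k
  have w: "f (map \<xi> [0..<Suc k]) \<in> words d" using tree_aut_words[OF f boundary_map[OF xi]] .
  have "length (f (map \<xi> [0..<Suc k])) = Suc k" using tree_aut_length[OF f boundary_map[OF xi, of "Suc k"]] by (simp del: upt_Suc)
  then show "aut_bd f \<xi> k \<in> {1..d}" unfolding aut_bd_def using words_nth[OF w, of k] by (simp del: upt_Suc)
qed

lemma aut_bd_comp:
  assumes f: "tree_aut d f" and g: "tree_aut d g" and xi: "\<xi> \<in> boundary d"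
  shows "aut_bd (f \<circ> g) \<xi> = aut_bd f (aut_bd g \<xi>)"
proof
  fix k
  have "(f \<circ> g) (map \<xi> [0..<Suc k]) = f (map (aut_bd g \<xi>) [0..<Suc k])"
    using aut_bd_map[OF g xi] by (simp del: upt_Suc)
  also have "\<dots> = map (aut_bd f (aut_bd g \<xi>)) [0..<Suc k]"
    using aut_bd_map[OF f aut_bd_boundary[OF g xi]] .
  finally show "aut_bd (f \<circ> g) \<xi> k = aut_bd f (aut_bd g \<xi>) k"
    unfolding aut_bd_def by (simp del: upt_Suc)
qed

lemma aut_bd_id: "aut_bd id \<xi> = \<xi>"
  by (simp add: aut_bd_def fun_eq_iff del: upt_Suc)

lemma aut_bd_Cons:
  assumes f: "tree_aut d f" and x: "x \<in> {1..d}" and w: "w \<in> boundary d"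
  shows "aut_bd f (conc [x] w) = conc [aut_rho d f x] (aut_bd (aut_state f x) w)"
proof
  fix k
  have m: "map (conc [x] w) [0..<Suc k] = x # map w [0..<k]"
    by (simp only: map_upt_Suc_Cons) (simp add: conc_def del: upt_Suc)
  have fx: "f (x # map w [0..<k]) = aut_rho d f x # aut_state f x (map w [0..<k])"
    using tree_aut_Cons[OF f x boundary_map[OF w]] .
  show "aut_bd f (conc [x] w) k = conc [aut_rho d f x] (aut_bd (aut_state f x) w) k"
  proof (cases k)
    case 0 then show ?thesis unfolding aut_bd_def using m fx by (simp add: conc_def del: upt_Suc)
  next
    case (Suc j)
    have "aut_bd f (conc [x] w) k = aut_state f x (map w [0..<k]) ! j"
      unfolding aut_bd_def using m fx Suc by (simp del: upt_Suc)
    also have "\<dots> = aut_bd (aut_state f x) w j" unfolding aut_bd_def using Suc by (simp del: upt_Suc)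
    finally show ?thesis using Suc by (simp add: conc_def)
  qed
qed

lemma aut_bd_determines:
  assumes f: "tree_aut d f" and g: "tree_aut d g" and d: "d \<ge> 1"
    and eq: "\<And>\<xi>. \<xi> \<in> boundary d \<Longrightarrow> aut_bd f \<xi> = aut_bd g \<xi>"
  shows "f = g"
proof
  fix w
  show "f w = g w"
  proof (cases "w \<in> words d")
    case False then show ?thesis using tree_aut_out[OF f] tree_aut_out[OF g] by simp
  next
    case True
    let ?\<xi> = "conc w (\<lambda>_. 1)"
    have one: "(\<lambda>_. 1) \<in> boundary d" using d by (simp add: boundary_def)
    have xi: "?\<xi> \<in> boundary d" using conc_boundary[OF True one] .
    have mw: "map ?\<xi> [0..<length w] = w" by (rule nth_equalityI) (simp_all add: conc_def del: upt_Suc)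
    have "f w = map (aut_bd f ?\<xi>) [0..<length w]" using aut_bd_map[OF f xi, of "length w"] mw by simp
    also have "\<dots> = map (aut_bd g ?\<xi>) [0..<length w]" using eq[OF xi] by simp
    also have "\<dots> = g w" using aut_bd_map[OF g xi, of "length w"] mw by simp
    finally show ?thesis .
  qed
qed

section \<open>Complete subtrees and leaves\<close>

abbreviation LL :: "nat \<Rightarrow> nat list set \<Rightarrow> nat list list" where
  "LL d T \<equiv> sorted_list_of_set (leaves d T)"

lemma cs_finite: "complete_subtree d T \<Longrightarrow> finite T" by (simp add: complete_subtree_def)
lemma cs_Nil: "complete_subtree d T \<Longrightarrow> [] \<in> T" by (simp add: complete_subtree_def)
lemma cs_words: "complete_subtree d T \<Longrightarrow> u \<in> T \<Longrightarrow> u \<in> words d"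
  by (auto simp add: complete_subtree_def)
lemma cs_parent: "complete_subtree d T \<Longrightarrow> u @ [x] \<in> T \<Longrightarrow> u \<in> T"
  unfolding complete_subtree_def by blast
lemma cs_children: "complete_subtree d T \<Longrightarrow> u @ [x] \<in> T \<Longrightarrow> y \<in> {1..d} \<Longrightarrow> u @ [y] \<in> T"
proof -
  assume T: "complete_subtree d T" and ux: "u @ [x] \<in> T" and y: "y \<in> {1..d}"
  have u: "u \<in> T" using cs_parent[OF T ux] .
  have "x \<in> {1..d}" using cs_words[OF T ux] by simp
  then have "\<not> (\<forall>x\<in>{1..d}. u @ [x] \<notin> T)" using ux by blast
  then have "\<forall>x\<in>{1..d}. u @ [x] \<in> T" using T u unfolding complete_subtree_def by blast
  then show ?thesis using y by blast
qed

lemma cs_prefix: "complete_subtree d T \<Longrightarrow> u @ v \<in> T \<Longrightarrow> u \<in> T"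
proof (induction v rule: rev_induct)
  case Nil then show ?case by simp
next
  case (snoc x v)
  then show ?case using cs_parent[OF snoc.prems(1), of "u @ v" x] by simp
qed

lemma leaves_sub: "leaves d T \<subseteq> T" by (auto simp: leaves_def)

lemma leaf_ext:
  assumes T: "complete_subtree d T" and l: "l \<in> leaves d T" and lv: "l @ v \<in> T"
  shows "v = []"
proof (rule ccontr)
  assume "v \<noteq> []"
  then obtain x v' where v: "v = x # v'" by (cases v) auto
  have "l @ [x] \<in> T" using cs_prefix[OF T, of "l @ [x]" v'] lv v by simp
  moreover have "x \<in> {1..d}" using cs_words[OF T lv] v by simp
  ultimately show False using l by (auto simp: leaves_def)
qed

lemma leaves_finite: "complete_subtree d T \<Longrightarrow> finite (leaves d T)"
  using cs_finite finite_subset[OF leaves_sub] by blast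

lemma LL_set: "complete_subtree d T \<Longrightarrow> set (LL d T) = leaves d T"
  using leaves_finite by simp

lemma LL_length: "complete_subtree d T \<Longrightarrow> length (LL d T) = nleaves d T"
  using leaves_finite by (simp add: nleaves_def)

lemma LL_sorted: "sorted_wrt (<) (LL d T)"
  by (rule strict_sorted_list_of_set)

lemma LL_distinct: "distinct (LL d T)"
  by simp

lemma leaf_in:
  assumes T: "complete_subtree d T" and i: "i \<in> {1..nleaves d T}"
  shows "leaf d T i \<in> leaves d T"
proof -
  have "i - 1 < length (LL d T)" using i LL_length[OF T] by auto
  then show ?thesis unfolding leaf_def using LL_set[OF T] nth_mem by blast
qed

lemma leaf_inj:
  assumes T: "complete_subtree d T" and i: "i \<in> {1..nleaves d T}" and j: "j \<in> {1..nleaves d T}"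
    and e: "leaf d T i = leaf d T j"
  shows "i = j"
proof -
  have "i - 1 < length (LL d T)" "j - 1 < length (LL d T)" using i j LL_length[OF T] by auto
  then have "i - 1 = j - 1" using e unfolding leaf_def using nth_eq_iff_index_eq[OF LL_distinct] by blast
  then show ?thesis using i j by auto
qed

lemma leaf_surj:
  assumes T: "complete_subtree d T" and l: "l \<in> leaves d T"
  shows "\<exists>i\<in>{1..nleaves d T}. leaf d T i = l"
proof -
  obtain j where j: "j < length (LL d T)" "LL d T ! j = l" using l LL_set[OF T] by (metis in_set_conv_nth)
  then show ?thesis using LL_length[OF T] unfolding leaf_def
    by (intro bexI[of _ "Suc j"]) auto
qed

lemma is_prefix_map: "is_prefix v \<xi> \<longleftrightarrow> v = map \<xi> [0..<length v]"
proof
  assume "is_prefix v \<xi>" then show "v = map \<xi> [0..<length v]"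
    unfolding is_prefix_def by (intro nth_equalityI) (simp_all del: upt_Suc)
next
  assume h: "v = map \<xi> [0..<length v]"
  show "is_prefix v \<xi>" unfolding is_prefix_def
  proof (intro allI impI)
    fix j assume j: "j < length v"
    have "v ! j = map \<xi> [0..<length v] ! j" using arg_cong[OF h, of "\<lambda>x. x ! j"] .
    also have "\<dots> = \<xi> j" using j by (simp del: upt_Suc)
    finally show "\<xi> j = v ! j" by simp
  qed
qed

lemma leaf_prefix_unique:
  assumes T: "complete_subtree d T" and l1: "l1 \<in> leaves d T" and l2: "l2 \<in> leaves d T"
    and p1: "is_prefix l1 \<xi>" and p2: "is_prefix l2 \<xi>"
  shows "l1 = l2"
proof -
  have gen: "a = b" if a: "a \<in> leaves d T" and b: "b \<in> leaves d T" and pa: "is_prefix a \<xi>" and pb: "is_prefix b \<xi>"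
    and le: "length a \<le> length b" for a b
  proof -
    have "a = map \<xi> [0..<length a]" "b = map \<xi> [0..<length b]" using pa pb is_prefix_map by blast+
    then have "b = a @ drop (length a) b"
      using le by (metis append_take_drop_id take_map take_upt add_0 le_add_diff_inverse)
    then have "drop (length a) b = []" using leaf_ext[OF T a] b leaves_sub by (metis subsetD)
    then show ?thesis using \<open>b = a @ drop (length a) b\<close> by simp
  qed
  show ?thesis
  proof (cases "length l1 \<le> length l2")
    case True then show ?thesis using gen[OF l1 l2 p1 p2] by simp
  next
    case False then show ?thesis using gen[OF l2 l1 p2 p1] by simp
  qed
qed

lemma leaf_prefix_exists:
  assumes T: "complete_subtree d T" and xi: "\<xi> \<in> boundary d"
  shows "\<exists>l\<in>leaves d T. is_prefix l \<xi>"
proof (rule ccontr)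
  assume no: "\<not> ?thesis"
  have all: "map \<xi> [0..<m] \<in> T" for m
  proof (induction m)
    case 0 then show ?case using cs_Nil[OF T] by simp
  next
    case (Suc m)
    have "map \<xi> [0..<m] \<notin> leaves d T" using no is_prefix_map by fastforce
    then obtain x where x: "x \<in> {1..d}" "map \<xi> [0..<m] @ [x] \<in> T" using Suc by (auto simp: leaves_def)
    have "\<xi> m \<in> {1..d}" using xi by (simp add: boundary_def)
    then have "map \<xi> [0..<m] @ [\<xi> m] \<in> T" using cs_children[OF T x(2)] by blast
    then show ?case by simp
  qed
  obtain B where B: "\<forall>u\<in>T. length u < B"
    using cs_finite[OF T] by (metis finite_nat_set_iff_bounded imageI finite_imageI)
  then show False using all[of B] by fastforce
qed

lemma leaf_prefix_ex1:
  assumes T: "complete_subtree d T" and xi: "\<xi> \<in> boundary d"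
  shows "\<exists>!i. i \<in> {1..nleaves d T} \<and> is_prefix (leaf d T i) \<xi>"
proof -
  obtain l where l: "l \<in> leaves d T" "is_prefix l \<xi>" using leaf_prefix_exists[OF T xi] by blast
  obtain i where i: "i \<in> {1..nleaves d T}" "leaf d T i = l" using leaf_surj[OF T l(1)] by blast
  show ?thesis
  proof (rule ex1I[of _ i])
    show "i \<in> {1..nleaves d T} \<and> is_prefix (leaf d T i) \<xi>" using i l by simp
    fix j assume j: "j \<in> {1..nleaves d T} \<and> is_prefix (leaf d T j) \<xi>"
    then have "leaf d T j = l" using leaf_prefix_unique[OF T leaf_in[OF T] l(1)] l(2) by blast
    then show "j = i" using leaf_inj[OF T] i j by metis
  qed
qed

lemma leaf_the:
  assumes T: "complete_subtree d T" and i: "i \<in> {1..nleaves d T}" and w: "w \<in> boundary d"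
  shows "(THE j. j \<in> {1..nleaves d T} \<and> is_prefix (leaf d T j) (conc (leaf d T i) w)) = i"
proof -
  have l: "leaf d T i \<in> words d" using cs_words[OF T] leaf_in[OF T i] leaves_sub by blast
  have xi: "conc (leaf d T i) w \<in> boundary d" using conc_boundary[OF l w] .
  show ?thesis
    using the1_equality[OF leaf_prefix_ex1[OF T xi]] i is_prefix_conc by blast
qed

section \<open>Adding a caret\<close>

lemma lex_less_split:
  fixes y l :: "nat list"
  assumes "y < l" and "\<not> (\<exists>v. l = y @ v)"
  shows "\<exists>u a b v w. a < b \<and> y = u @ a # v \<and> l = u @ b # w"
  using assms unfolding list_less_def lexord_def by auto

lemma lex_less_snoc1:
  fixes y l :: "nat list"
  assumes "y < l" and "\<not> (\<exists>v. l = y @ v)"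
  shows "y < l @ [x]"
proof -
  obtain u a b v w where "a < b" "y = u @ a # v" "l = u @ b # w" using lex_less_split[OF assms] by blast
  then show ?thesis unfolding list_less_def lexord_def by auto
qed

lemma lex_less_snoc2:
  fixes z l :: "nat list"
  assumes "l < z" and "\<not> (\<exists>v. z = l @ v)"
  shows "l @ [x] < z"
proof -
  obtain u a b v w where "a < b" "l = u @ a # v" "z = u @ b # w" using lex_less_split[OF assms] by blast
  then show ?thesis unfolding list_less_def lexord_def by auto
qed

lemma lex_less_snoc3:
  fixes l :: "nat list"
  assumes "x < y"
  shows "l @ [x] < l @ [y]"
  using assms unfolding list_less_def lexord_def by fastforce

lemma complete_add_caret:
  assumes T: "complete_subtree d T" and l: "l \<in> leaves d T"
  shows "complete_subtree d (add_caret d T l)"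
proof -
  have lT: "l \<in> T" using l leaves_sub by blast
  have lw: "l \<in> words d" using cs_words[OF T lT] .
  let ?T' = "add_caret d T l"
  have fin: "finite ?T'" using cs_finite[OF T] by (simp add: add_caret_def)
  have nil: "[] \<in> ?T'" using cs_Nil[OF T] by (simp add: add_caret_def)
  have sub: "?T' \<subseteq> words d" using T lw by (auto simp: add_caret_def complete_subtree_def)
  have par: "\<forall>u x. u @ [x] \<in> ?T' \<longrightarrow> u \<in> ?T'"
    using cs_parent[OF T] lT by (auto simp: add_caret_def)
  have ch: "\<forall>u\<in>?T'. (\<forall>x\<in>{1..d}. u @ [x] \<notin> ?T') \<or> (\<forall>x\<in>{1..d}. u @ [x] \<in> ?T')"
  proof
    fix u assume u: "u \<in> ?T'"
    show "(\<forall>x\<in>{1..d}. u @ [x] \<notin> ?T') \<or> (\<forall>x\<in>{1..d}. u @ [x] \<in> ?T')"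
    proof (cases "u = l")
      case True then show ?thesis by (auto simp: add_caret_def)
    next
      case False
      then have "u @ [x] \<in> ?T' \<longleftrightarrow> u @ [x] \<in> T" for x by (auto simp: add_caret_def)
      moreover have "u \<in> T \<Longrightarrow> ?thesis" using T calculation unfolding complete_subtree_def by auto
      moreover have "u \<notin> T \<Longrightarrow> \<forall>x. u @ [x] \<notin> T" using cs_parent[OF T] by blast
      ultimately show ?thesis by auto
    qed
  qed
  show ?thesis unfolding complete_subtree_def using fin nil sub par ch by blast
qed

lemma leaves_add_caret:
  assumes T: "complete_subtree d T" and l: "l \<in> leaves d T" and d: "d \<ge> 1"
  shows "leaves d (add_caret d T l) = (leaves d T - {l}) \<union> {l @ [x] |x. x \<in> {1..d}}"
proof -
  have lT: "l \<in> T" using l leaves_sub by blast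
  have nl: "l @ [x] \<notin> T" for x
  proof
    assume "l @ [x] \<in> T" then have "[x] = []" using leaf_ext[OF T l] by blast
    then show False by simp
  qed
  have nl2: "l @ [x, y] \<notin> T" for x y
    using nl cs_parent[OF T, of "l @ [x]" y] by auto
  show ?thesis
  proof (rule equalityI; rule subsetI)
    fix u assume u: "u \<in> leaves d (add_caret d T l)"
    then have uT: "u \<in> add_caret d T l" and nc: "\<forall>x\<in>{1..d}. u @ [x] \<notin> add_caret d T l"
      by (auto simp: leaves_def)
    show "u \<in> (leaves d T - {l}) \<union> {l @ [x] |x. x \<in> {1..d}}"
    proof (cases "u \<in> T")
      case True
      have "u \<noteq> l" using nc d by (auto simp: add_caret_def)
      then show ?thesis using True nc by (auto simp: leaves_def add_caret_def)
    next
      case False then show ?thesis using uT by (auto simp: add_caret_def)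
    qed
  next
    fix u assume "u \<in> (leaves d T - {l}) \<union> {l @ [x] |x. x \<in> {1..d}}"
    then consider "u \<in> leaves d T" "u \<noteq> l" | x where "x \<in> {1..d}" "u = l @ [x]" by blast
    then show "u \<in> leaves d (add_caret d T l)"
    proof cases
      case 1 then show ?thesis by (auto simp: leaves_def add_caret_def)
    next
      case 2 then show ?thesis using nl2 by (auto simp: leaves_def add_caret_def)
    qed
  qed
qed

lemma LL_add_caret:
  assumes T: "complete_subtree d T" and p: "p \<in> {1..nleaves d T}" and d: "d \<ge> 1"
  defines "l \<equiv> leaf d T p"
  shows "LL d (add_caret d T l) = take (p - 1) (LL d T) @ map (\<lambda>x. l @ [x]) [1..<d+1] @ drop p (LL d T)"
proof -
  let ?L = "LL d T"
  have l: "l \<in> leaves d T" using leaf_in[OF T p] by (simp add: l_def)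
  have lenL: "length ?L = nleaves d T" using LL_length[OF T] .
  have lp: "?L ! (p - 1) = l" by (simp add: l_def leaf_def)
  have p1: "p - 1 < length ?L" using p lenL by auto
  have sL: "sorted_wrt (<) ?L" by (rule LL_sorted)
  have noprefix: "\<not> (\<exists>v. b = a @ v)" if "a \<in> leaves d T" "b \<in> leaves d T" "a \<noteq> b" for a b
    using leaf_ext[OF T] that leaves_sub by fastforce
  let ?M = "take (p - 1) ?L @ map (\<lambda>x. l @ [x]) [1..<d+1] @ drop p ?L"
  have setM: "set ?M = (leaves d T - {l}) \<union> {l @ [x] |x. x \<in> {1..d}}"
  proof -
    have "?L = take (p - 1) ?L @ ?L ! (p - 1) # drop (Suc (p - 1)) ?L" by (rule id_take_nth_drop[OF p1])
    moreover have "Suc (p - 1) = p" using p by auto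
    ultimately have dec: "?L = take (p - 1) ?L @ l # drop p ?L" using lp by simp
    have "set ?L = set (take (p - 1) ?L) \<union> {l} \<union> set (drop p ?L)"
      using arg_cong[OF dec, of set] by simp
    moreover have "l \<notin> set (take (p - 1) ?L) \<union> set (drop p ?L)"
      using arg_cong[OF dec, of distinct] LL_distinct[of d T] by simp
    ultimately have "set (take (p - 1) ?L) \<union> set (drop p ?L) = leaves d T - {l}"
      using LL_set[OF T] by blast
    moreover have "set (map (\<lambda>x. l @ [x]) [1..<d+1]) = {l @ [x] |x. x \<in> {1..d}}" by auto
    ultimately show ?thesis by auto
  qed
  have sM: "sorted_wrt (<) ?M"
  proof -
    have s1: "sorted_wrt (<) (take (p - 1) ?L)" using sL sorted_wrt_take by blast
    have s3: "sorted_wrt (<) (drop p ?L)" using sL sorted_wrt_drop by blast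
    have s2: "sorted_wrt (<) (map (\<lambda>x. l @ [x]) [1..<d+1])"
      unfolding sorted_wrt_map by (rule sorted_wrt_mono_rel[OF _ sorted_wrt_upt]) (rule lex_less_snoc3)
    have lt1: "y < l" if yin: "y \<in> set (take (p - 1) ?L)" for y
    proof -
      obtain j where j: "j < p - 1" "y = ?L ! j" using yin p1 by (auto simp: in_set_conv_nth)
      then show ?thesis using sorted_wrt_nth_less[OF sL j(1) p1] lp by simp
    qed
    have lt3: "l < z" if zin: "z \<in> set (drop p ?L)" for z
    proof -
      obtain j where j: "j < length ?L - p" "z = ?L ! (p + j)" using zin by (auto simp: in_set_conv_nth)
      have a: "p - 1 < p + j" and b: "p + j < length ?L" using j p by auto
      show ?thesis using sorted_wrt_nth_less[OF sL a b] lp j(2) by simp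
    qed
    have inL1: "y \<in> leaves d T" if "y \<in> set (take (p - 1) ?L)" for y
      using set_take_subset[of "p - 1" ?L] that LL_set[OF T] by blast
    have inL3: "z \<in> leaves d T" if "z \<in> set (drop p ?L)" for z
      using set_drop_subset[of p ?L] that LL_set[OF T] by blast
    have c12: "y < l @ [x]" if "y \<in> set (take (p - 1) ?L)" for y x
      using lex_less_snoc1[OF lt1[OF that] noprefix[OF inL1[OF that] l]] lt1[OF that] by blast
    have c23: "l @ [x] < z" if "z \<in> set (drop p ?L)" for z x
      using lex_less_snoc2[OF lt3[OF that] noprefix[OF l inL3[OF that]]] lt3[OF that] by blast
    have c13: "y < z" if "y \<in> set (take (p - 1) ?L)" "z \<in> set (drop p ?L)" for y z
      using lt1[OF that(1)] lt3[OF that(2)] by simp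
    show ?thesis using s1 s2 s3 c12 c23 c13 by (auto simp: sorted_wrt_append)
  qed
  have "set (LL d (add_caret d T l)) = set ?M"
    using leaves_add_caret[OF T l d] setM LL_set[OF complete_add_caret[OF T l]] by simp
  then show ?thesis
    using strict_sorted_equal[OF sM LL_sorted[of d "add_caret d T l"]] by simp
qed

lemma leaf_add_caret:
  assumes T: "complete_subtree d T" and p: "p \<in> {1..nleaves d T}" and d: "d \<ge> 1"
  defines "T' \<equiv> add_caret d T (leaf d T p)"
  shows "nleaves d T' = nleaves d T + d - 1"
    and "1 \<le> i \<Longrightarrow> i < p \<Longrightarrow> leaf d T' i = leaf d T i"
    and "p \<le> i \<Longrightarrow> i \<le> p + d - 1 \<Longrightarrow> leaf d T' i = leaf d T p @ [i - p + 1]"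
    and "p + d - 1 < i \<Longrightarrow> i \<le> nleaves d T + d - 1 \<Longrightarrow> leaf d T' i = leaf d T (i - d + 1)"
proof -
  let ?L = "LL d T" and ?l = "leaf d T p"
  have l: "?l \<in> leaves d T" using leaf_in[OF T p] .
  have T': "complete_subtree d T'" unfolding T'_def using complete_add_caret[OF T l] .
  have M: "LL d T' = take (p - 1) ?L @ map (\<lambda>x. ?l @ [x]) [1..<d+1] @ drop p ?L"
    unfolding T'_def using LL_add_caret[OF T p d] by simp
  have lenL: "length ?L = nleaves d T" using LL_length[OF T] .
  have pn: "1 \<le> p" "p \<le> nleaves d T" using p by auto
  have lt: "length (take (p - 1) ?L) = p - 1" using pn lenL by simp
  show "nleaves d T' = nleaves d T + d - 1"
    using LL_length[OF T'] M lenL pn d by simp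
  show "leaf d T' i = leaf d T i" if "1 \<le> i" "i < p"
  proof -
    have "i - 1 < p - 1" using that by simp
    then have "LL d T' ! (i - 1) = take (p - 1) ?L ! (i - 1)" using M lt by (simp add: nth_append)
    also have "\<dots> = ?L ! (i - 1)" using \<open>i - 1 < p - 1\<close> by simp
    finally show ?thesis by (simp add: leaf_def)
  qed
  show "leaf d T' i = ?l @ [i - p + 1]" if "p \<le> i" "i \<le> p + d - 1"
  proof -
    have a: "\<not> i - 1 < p - 1" using that pn by simp
    have b: "i - 1 - (p - 1) = i - p" using that pn by simp
    have c: "i - p < d" using that d by simp
    have "LL d T' ! (i - 1) = (map (\<lambda>x. ?l @ [x]) [1..<d+1] @ drop p ?L) ! (i - p)"
      using M lt a b by (simp add: nth_append del: upt_Suc)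
    also have "\<dots> = ?l @ [i - p + 1]" using c by (simp add: nth_append del: upt_Suc)
    finally show ?thesis by (simp add: leaf_def)
  qed
  show "leaf d T' i = leaf d T (i - d + 1)" if "p + d - 1 < i" "i \<le> nleaves d T + d - 1"
  proof -
    have a: "\<not> i - 1 < p - 1" using that pn by simp
    have b: "i - 1 - (p - 1) = i - p" using that pn by simp
    have c: "\<not> i - p < d" using that d by simp
    have e: "p + (i - p - d) = i - d" using that pn d by simp
    have f: "i - p - d < length ?L - p" using that pn d lenL by simp
    have "LL d T' ! (i - 1) = (map (\<lambda>x. ?l @ [x]) [1..<d+1] @ drop p ?L) ! (i - p)"
      using M lt a b by (simp add: nth_append del: upt_Suc)
    also have "\<dots> = drop p ?L ! (i - p - d)" using c by (simp add: nth_append del: upt_Suc)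
    also have "\<dots> = ?L ! (i - d)" using e f pn lenL by simp
    finally show ?thesis using that d by (simp add: leaf_def)
  qed
qed

section \<open>The action aa\<close>

lemma aa_conc:
  assumes Tp: "complete_subtree d Tp" and i: "i \<in> {1..nleaves d Tp}" and w: "w \<in> boundary d"
  shows "aa d (Tm, (\<sigma>, fs), Tp) (conc (leaf d Tp i) w) = conc (leaf d Tm (\<sigma> i)) (aut_bd (fs i) w)"
proof -
  have l: "leaf d Tp i \<in> words d" using cs_words[OF Tp] leaf_in[OF Tp i] leaves_sub by blast
  have xi: "conc (leaf d Tp i) w \<in> boundary d" using conc_boundary[OF l w] .
  show ?thesis unfolding aa_def using xi leaf_the[OF Tp i w] sdrop_conc[of "leaf d Tp i" w]
    by (simp add: Let_def)
qed

lemma aa_out: "\<xi> \<notin> boundary d \<Longrightarrow> aa d t \<xi> = \<xi>"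
  by (simp add: aa_def split: prod.splits)

lemma boundary_decomp:
  assumes T: "complete_subtree d T" and xi: "\<xi> \<in> boundary d"
  shows "\<exists>i\<in>{1..nleaves d T}. \<exists>w\<in>boundary d. \<xi> = conc (leaf d T i) w"
proof -
  obtain l where l: "l \<in> leaves d T" "is_prefix l \<xi>" using leaf_prefix_exists[OF T xi] by blast
  obtain i where i: "i \<in> {1..nleaves d T}" "leaf d T i = l" using leaf_surj[OF T l(1)] by blast
  show ?thesis using i l conc_sdrop[OF l(2)] sdrop_boundary[OF xi] by metis
qed

lemma aa_ext:
  assumes T: "complete_subtree d T"
    and eq: "\<And>i w. i \<in> {1..nleaves d T} \<Longrightarrow> w \<in> boundary d \<Longrightarrow> aa d t (conc (leaf d T i) w) = aa d t' (conc (leaf d T i) w)"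
  shows "aa d t = aa d t'"
proof
  fix \<xi>
  show "aa d t \<xi> = aa d t' \<xi>"
  proof (cases "\<xi> \<in> boundary d")
    case True
    then obtain i w where "i \<in> {1..nleaves d T}" "w \<in> boundary d" "\<xi> = conc (leaf d T i) w"
      using boundary_decomp[OF T] by blast
    then show ?thesis using eq by simp
  next
    case False then show ?thesis by (simp add: aa_out)
  qed
qed

lemma triple_okD:
  assumes "triple_ok d (Tm, (\<sigma>, fs), Tp)"
  shows "complete_subtree d Tm" "complete_subtree d Tp" "nleaves d Tm = nleaves d Tp"
    "\<sigma> permutes {1..nleaves d Tp}" "\<And>i. i \<in> {1..nleaves d Tp} \<Longrightarrow> tree_aut d (fs i)"
    "\<And>i. i \<notin> {1..nleaves d Tp} \<Longrightarrow> fs i = id"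
  using assms by (simp_all add: triple_ok_def)

lemma permutes_in: "\<sigma> permutes S \<Longrightarrow> x \<in> S \<Longrightarrow> \<sigma> x \<in> S"
  by (simp add: permutes_in_image)

lemma permutes_inj': "\<sigma> permutes S \<Longrightarrow> \<sigma> x = \<sigma> y \<Longrightarrow> x = y"
  by (meson permutes_inj injD)

section \<open>The cloned permutation\<close>

lemma clone_vals:
  assumes \<sigma>: "\<sigma> permutes {1..n}" and \<rho>: "\<rho> permutes {1..d}" and k: "k \<in> {1..n}" and d: "d \<ge> 1"
  defines "\<sigma>' \<equiv> clone_perm d n k \<sigma> \<circ> local_perm d k \<rho>"
  shows "1 \<le> j \<Longrightarrow> j < k \<Longrightarrow> \<sigma>' j = (if \<sigma> j < \<sigma> k then \<sigma> j else \<sigma> j + d - 1)"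
    and "x \<in> {1..d} \<Longrightarrow> \<sigma>' (k + x - 1) = \<sigma> k + \<rho> x - 1"
    and "k + d - 1 < j \<Longrightarrow> j \<le> n + d - 1 \<Longrightarrow>
          \<sigma>' j = (if \<sigma> (j - d + 1) < \<sigma> k then \<sigma> (j - d + 1) else \<sigma> (j - d + 1) + d - 1)"
    and "j \<notin> {1..n + d - 1} \<Longrightarrow> \<sigma>' j = j"
proof -
  show "\<sigma>' j = (if \<sigma> j < \<sigma> k then \<sigma> j else \<sigma> j + d - 1)" if "1 \<le> j" "j < k"
    using that unfolding \<sigma>'_def by (simp add: local_perm_def clone_perm_def)
  show "\<sigma>' (k + x - 1) = \<sigma> k + \<rho> x - 1" if x: "x \<in> {1..d}"
  proof -
    have rx: "\<rho> x \<in> {1..d}" using permutes_in[OF \<rho> x] .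
    have c: "k \<le> k + x - 1 \<and> k + x - 1 \<le> k + d - 1" using x k by auto
    have e: "k + x - 1 - k + 1 = x" using x by auto
    have "local_perm d k \<rho> (k + x - 1) = k + \<rho> (k + x - 1 - k + 1) - 1"
      unfolding local_perm_def using c by (rule if_P)
    then have "local_perm d k \<rho> (k + x - 1) = k + \<rho> x - 1" unfolding e .
    moreover have "clone_perm d n k \<sigma> (k + \<rho> x - 1) = \<sigma> k + \<rho> x - 1"
    proof -
      have c1: "\<not> (1 \<le> k + \<rho> x - 1 \<and> k + \<rho> x - 1 < k)" using rx by auto
      have c2: "k \<le> k + \<rho> x - 1 \<and> k + \<rho> x - 1 \<le> k + d - 1" using rx k by auto
      have e: "\<sigma> k + (k + \<rho> x - 1) - k = \<sigma> k + \<rho> x - 1" using rx by auto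
      show ?thesis unfolding clone_perm_def using c1 c2 e by (simp only: if_False if_True simp_thms)
    qed
    ultimately show ?thesis unfolding \<sigma>'_def by simp
  qed
  show "\<sigma>' j = (if \<sigma> (j - d + 1) < \<sigma> k then \<sigma> (j - d + 1) else \<sigma> (j - d + 1) + d - 1)"
    if "k + d - 1 < j" "j \<le> n + d - 1"
  proof -
    have c0: "\<not> (k \<le> j \<and> j \<le> k + d - 1)" using that by auto
    have l: "local_perm d k \<rho> j = j" unfolding local_perm_def using c0 by (rule if_not_P)
    have c1: "\<not> (1 \<le> j \<and> j < k)" using that by auto
    have c3: "k + d - 1 < j \<and> j \<le> n + d - 1" using that by auto
    show ?thesis unfolding \<sigma>'_def comp_def l unfolding clone_perm_def using c0 c1 c3
      by (simp only: if_False if_True simp_thms)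
  qed
  show "\<sigma>' j = j" if jn: "j \<notin> {1..n + d - 1}"
  proof -
    have c0: "\<not> (k \<le> j \<and> j \<le> k + d - 1)" using jn k d by auto
    have l: "local_perm d k \<rho> j = j" unfolding local_perm_def using c0 by (rule if_not_P)
    have c1: "\<not> (1 \<le> j \<and> j < k)" using jn k d by auto
    have c3: "\<not> (k + d - 1 < j \<and> j \<le> n + d - 1)" using jn by auto
    show ?thesis unfolding \<sigma>'_def comp_def l unfolding clone_perm_def using c0 c1 c3
      by (simp only: if_False if_True simp_thms)
  qed
qed

lemma clone_permutes:
  assumes \<sigma>: "\<sigma> permutes {1..n}" and \<rho>: "\<rho> permutes {1..d}" and k: "k \<in> {1..n}" and d: "d \<ge> 1"
  shows "(clone_perm d n k \<sigma> \<circ> local_perm d k \<rho>) permutes {1..n + d - 1}"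
proof -
  let ?s = "clone_perm d n k \<sigma> \<circ> local_perm d k \<rho>"
  let ?N = "n + d - 1"
  note V = clone_vals[OF \<sigma> \<rho> k d]
  define sh where "sh m = (if m < \<sigma> k then m else m + d - 1)" for m
  define oi where "oi j = (if j < k then j else j - d + 1)" for j
  have sk: "\<sigma> k \<in> {1..n}" using permutes_in[OF \<sigma> k] .
  have nb: "oi j \<in> {1..n} \<and> oi j \<noteq> k \<and> ?s j = sh (\<sigma> (oi j))"
    if "j \<in> {1..?N}" "\<not> (k \<le> j \<and> j \<le> k + d - 1)" for j
  proof (cases "j < k")
    case True then show ?thesis using that V(1)[of j] k by (auto simp: oi_def sh_def)
  next
    case False
    then have "k + d - 1 < j" "j \<le> ?N" using that by auto
    then show ?thesis using that V(3)[of j] k False by (auto simp: oi_def sh_def)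
  qed
  have bl: "?s j = \<sigma> k + \<rho> (j - k + 1) - 1 \<and> j - k + 1 \<in> {1..d}"
    if "k \<le> j" "j \<le> k + d - 1" for j
  proof -
    have "j - k + 1 \<in> {1..d}" using that d by auto
    moreover have "k + (j - k + 1) - 1 = j" using that by simp
    ultimately show ?thesis using V(2)[of "j - k + 1"] by simp
  qed
  have sh_range: "sh m \<in> {1..?N} \<and> (sh m < \<sigma> k \<or> \<sigma> k + d - 1 < sh m)"
    if "m \<in> {1..n}" "m \<noteq> \<sigma> k" for m
    using that sk d by (auto simp: sh_def)
  have sh_inj: "sh a = sh b \<Longrightarrow> a = b" if "a \<noteq> \<sigma> k" "b \<noteq> \<sigma> k" for a b
    using that d by (auto simp: sh_def split: if_splits)
  have oi_inj: "oi a = oi b \<Longrightarrow> a = b"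
    if "a \<in> {1..?N}" "\<not> (k \<le> a \<and> a \<le> k + d - 1)" "b \<in> {1..?N}" "\<not> (k \<le> b \<and> b \<le> k + d - 1)" for a b
    using that d by (auto simp: oi_def split: if_splits)
  have into: "?s j \<in> {1..?N}" if j: "j \<in> {1..?N}" for j
  proof (cases "k \<le> j \<and> j \<le> k + d - 1")
    case True
    then have "\<rho> (j - k + 1) \<in> {1..d}" using bl[of j] permutes_in[OF \<rho>] by auto
    then show ?thesis using bl[of j] True sk by auto
  next
    case False
    have "\<sigma> (oi j) \<in> {1..n}" "\<sigma> (oi j) \<noteq> \<sigma> k"
      using nb[OF j False] permutes_in[OF \<sigma>] permutes_inj'[OF \<sigma>] by blast+
    then show ?thesis using nb[OF j False] sh_range by metis
  qed
  have inj: "inj_on ?s {1..?N}"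
  proof (rule inj_onI)
    fix a b assume a: "a \<in> {1..?N}" and b: "b \<in> {1..?N}" and e: "?s a = ?s b"
    show "a = b"
    proof (cases "k \<le> a \<and> a \<le> k + d - 1"; cases "k \<le> b \<and> b \<le> k + d - 1")
      assume A: "k \<le> a \<and> a \<le> k + d - 1" and B: "k \<le> b \<and> b \<le> k + d - 1"
      then have "\<rho> (a - k + 1) = \<rho> (b - k + 1)" using bl[of a] bl[of b] e sk
        using permutes_in[OF \<rho>] by (metis (no_types, lifting) One_nat_def add_diff_cancel_left'
            atLeastAtMost_iff diff_add_inverse2 le_add_diff_inverse2 Nat.add_diff_assoc2)
      then have "a - k + 1 = b - k + 1" using permutes_inj'[OF \<rho>] by blast
      then show ?thesis using A B by (metis add_right_cancel le_add_diff_inverse2)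
    next
      assume A: "k \<le> a \<and> a \<le> k + d - 1" and B: "\<not> (k \<le> b \<and> b \<le> k + d - 1)"
      have "\<rho> (a - k + 1) \<in> {1..d}" using bl[of a] A permutes_in[OF \<rho>] by auto
      then have r1: "\<sigma> k \<le> ?s a \<and> ?s a \<le> \<sigma> k + d - 1" using bl[of a] A by auto
      have "\<sigma> (oi b) \<in> {1..n}" "\<sigma> (oi b) \<noteq> \<sigma> k"
        using nb[OF b B] permutes_in[OF \<sigma>] permutes_inj'[OF \<sigma>] by blast+
      then have "?s b < \<sigma> k \<or> \<sigma> k + d - 1 < ?s b" using nb[OF b B] sh_range by metis
      then show ?thesis using r1 e by linarith
    next
      assume A: "\<not> (k \<le> a \<and> a \<le> k + d - 1)" and B: "k \<le> b \<and> b \<le> k + d - 1"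
      have "\<rho> (b - k + 1) \<in> {1..d}" using bl[of b] B permutes_in[OF \<rho>] by auto
      then have r1: "\<sigma> k \<le> ?s b \<and> ?s b \<le> \<sigma> k + d - 1" using bl[of b] B by auto
      have "\<sigma> (oi a) \<in> {1..n}" "\<sigma> (oi a) \<noteq> \<sigma> k"
        using nb[OF a A] permutes_in[OF \<sigma>] permutes_inj'[OF \<sigma>] by blast+
      then have "?s a < \<sigma> k \<or> \<sigma> k + d - 1 < ?s a" using nb[OF a A] sh_range by metis
      then show ?thesis using r1 e by linarith
    next
      assume A: "\<not> (k \<le> a \<and> a \<le> k + d - 1)" and B: "\<not> (k \<le> b \<and> b \<le> k + d - 1)"
      have "\<sigma> (oi a) \<noteq> \<sigma> k" "\<sigma> (oi b) \<noteq> \<sigma> k"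
        using nb[OF a A] nb[OF b B] permutes_inj'[OF \<sigma>] by blast+
      then have "\<sigma> (oi a) = \<sigma> (oi b)" using sh_inj nb[OF a A] nb[OF b B] e by metis
      then have "oi a = oi b" using permutes_inj'[OF \<sigma>] by blast
      then show ?thesis using oi_inj a A b B by blast
    qed
  qed
  have "?s ` {1..?N} \<subseteq> {1..?N}" using into by blast
  then have "?s ` {1..?N} = {1..?N}" using endo_inj_surj[OF _ _ inj] by blast
  then have "bij_betw ?s {1..?N} {1..?N}" using inj by (simp add: bij_betw_def)
  then show ?thesis using bij_imp_permutes V(4) by blast
qed

section \<open>Expansion preserves the action\<close>

lemma leaf_shift:
  assumes T: "complete_subtree d T" and p: "p \<in> {1..nleaves d T}" and d: "d \<ge> 1"
    and m: "m \<in> {1..nleaves d T}" and mp: "m \<noteq> p"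
  shows "leaf d (add_caret d T (leaf d T p)) (if m < p then m else m + d - 1) = leaf d T m"
proof (cases "m < p")
  case True then show ?thesis using leaf_add_caret(2)[OF T p d, of m] m by simp
next
  case False
  then have "p + d - 1 < m + d - 1" "m + d - 1 \<le> nleaves d T + d - 1" using mp m d by auto
  then show ?thesis using leaf_add_caret(4)[OF T p d, of "m + d - 1"] False d by simp
qed

lemma expansion_step:
  assumes ok: "triple_ok d (Tm, (\<sigma>, fs), Tp)" and d: "d \<ge> 1" and k: "k \<in> {1..nleaves d Tp}"
  defines "t' \<equiv> (add_caret d Tm (leaf d Tm (\<sigma> k)), kappa d (nleaves d Tp) k (\<sigma>, fs), add_caret d Tp (leaf d Tp k))"
  shows "triple_ok d t' \<and> aa d t' = aa d (Tm, (\<sigma>, fs), Tp)"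
proof -
  note O = triple_okD[OF ok]
  define n where "n = nleaves d Tp"
  define p where "p = \<sigma> k"
  define \<rho> where "\<rho> = aut_rho d (fs k)"
  define \<sigma>' where "\<sigma>' = clone_perm d n k \<sigma> \<circ> local_perm d k \<rho>"
  define fs' where "fs' = (\<lambda>i. if 1 \<le> i \<and> i < k then fs i
          else if k \<le> i \<and> i \<le> k + d - 1 then aut_state (fs k) (i - k + 1)
          else if k + d - 1 < i \<and> i \<le> n + d - 1 then fs (i - d + 1)
          else id)"
  define Tm' where "Tm' = add_caret d Tm (leaf d Tm p)"
  define Tp' where "Tp' = add_caret d Tp (leaf d Tp k)"
  have t': "t' = (Tm', (\<sigma>', fs'), Tp')"
    unfolding t'_def Tm'_def Tp'_def p_def \<sigma>'_def fs'_def n_def \<rho>_def by (simp add: kappa_def)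
  have Tm: "complete_subtree d Tm" and Tp: "complete_subtree d Tp" using O by auto
  have kn: "k \<in> {1..n}" using k by (simp add: n_def)
  have \<sigma>: "\<sigma> permutes {1..n}" using O(4) by (simp add: n_def)
  have nm: "nleaves d Tm = n" using O(3) by (simp add: n_def)
  have pn: "p \<in> {1..nleaves d Tm}" using permutes_in[OF \<sigma> kn] nm by (simp add: p_def)
  have fk: "tree_aut d (fs k)" using O(5) k by blast
  have \<rho>: "\<rho> permutes {1..d}" using aut_rho_permutes[OF fk] by (simp add: \<rho>_def)
  have Tm': "complete_subtree d Tm'" unfolding Tm'_def using complete_add_caret[OF Tm leaf_in[OF Tm pn]] .
  have Tp': "complete_subtree d Tp'" unfolding Tp'_def using complete_add_caret[OF Tp leaf_in[OF Tp k]] .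
  have nTp': "nleaves d Tp' = n + d - 1" using leaf_add_caret(1)[OF Tp k d] by (simp add: Tp'_def n_def)
  have nTm': "nleaves d Tm' = n + d - 1" using leaf_add_caret(1)[OF Tm pn d] nm by (simp add: Tm'_def)
  have \<sigma>': "\<sigma>' permutes {1..n + d - 1}" unfolding \<sigma>'_def using clone_permutes[OF \<sigma> \<rho> kn d] .
  note V = clone_vals[OF \<sigma> \<rho> kn d, folded \<sigma>'_def]
  have fs'_aut: "tree_aut d (fs' i)" if i: "i \<in> {1..n + d - 1}" for i
  proof -
    consider "1 \<le> i \<and> i < k" | "k \<le> i \<and> i \<le> k + d - 1" | "k + d - 1 < i \<and> i \<le> n + d - 1" using i by force
    then show ?thesis
    proof cases
      case 1 then show ?thesis using O(5)[of i] kn by (auto simp: fs'_def n_def)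
    next
      case 2
      then have "i - k + 1 \<in> {1..d}" using d by auto
      then show ?thesis using 2 tree_aut_state[OF fk] by (auto simp: fs'_def)
    next
      case 3
      then have "i - d + 1 \<in> {1..nleaves d Tp}" using d kn by (auto simp: n_def)
      then show ?thesis using 3 O(5) by (auto simp: fs'_def)
    qed
  qed
  have fs'_out: "fs' i = id" if "i \<notin> {1..n + d - 1}" for i
    using that kn by (auto simp: fs'_def)
  have ok': "triple_ok d t'"
    unfolding t' triple_ok_def using Tm' Tp' nTp' nTm' \<sigma>' fs'_aut fs'_out by auto
  have aa': "aa d t' = aa d (Tm, (\<sigma>, fs), Tp)"
    unfolding t'
  proof (rule aa_ext[OF Tp'])
    fix i w assume i: "i \<in> {1..nleaves d Tp'}" and w: "w \<in> boundary d"
    have iN: "i \<in> {1..n + d - 1}" using i nTp' by simp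
    have L: "aa d (Tm', (\<sigma>', fs'), Tp') (conc (leaf d Tp' i) w) = conc (leaf d Tm' (\<sigma>' i)) (aut_bd (fs' i) w)"
      using aa_conc[OF Tp' i w] .
    have oldcase: "aa d (Tm', (\<sigma>', fs'), Tp') (conc (leaf d Tp' i) w) = aa d (Tm, (\<sigma>, fs), Tp) (conc (leaf d Tp' i) w)"
      if m: "m \<in> {1..n}" "m \<noteq> k" and lm: "leaf d Tp' i = leaf d Tp m" and fm: "fs' i = fs m"
        and sm: "\<sigma>' i = (if \<sigma> m < p then \<sigma> m else \<sigma> m + d - 1)" for m
    proof -
      have sm1: "\<sigma> m \<in> {1..nleaves d Tm}" using permutes_in[OF \<sigma> m(1)] nm by simp
      have sm2: "\<sigma> m \<noteq> p" using m permutes_inj'[OF \<sigma>] by (auto simp: p_def)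
      have "leaf d Tm' (\<sigma>' i) = leaf d Tm (\<sigma> m)"
        using leaf_shift[OF Tm pn d sm1 sm2] sm by (simp add: Tm'_def)
      moreover have "m \<in> {1..nleaves d Tp}" using m by (simp add: n_def)
      ultimately show ?thesis using L lm fm aa_conc[OF Tp _ w, of m Tm \<sigma> fs] by simp
    qed
    consider "1 \<le> i \<and> i < k" | "k \<le> i \<and> i \<le> k + d - 1" | "k + d - 1 < i \<and> i \<le> n + d - 1" using iN by force
    then show "aa d (Tm', (\<sigma>', fs'), Tp') (conc (leaf d Tp' i) w) = aa d (Tm, (\<sigma>, fs), Tp) (conc (leaf d Tp' i) w)"
    proof cases
      case 1
      show ?thesis
      proof (rule oldcase[of i])
        show "i \<in> {1..n}" "i \<noteq> k" using 1 kn by auto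
        show "leaf d Tp' i = leaf d Tp i" using leaf_add_caret(2)[OF Tp k d, of i] 1 by (simp add: Tp'_def)
        show "fs' i = fs i" using 1 by (simp add: fs'_def)
        show "\<sigma>' i = (if \<sigma> i < p then \<sigma> i else \<sigma> i + d - 1)" using V(1)[of i] 1 by (simp add: p_def)
      qed
    next
      case 3
      show ?thesis
      proof (rule oldcase[of "i - d + 1"])
        show "i - d + 1 \<in> {1..n}" "i - d + 1 \<noteq> k" using 3 kn d by auto
        show "leaf d Tp' i = leaf d Tp (i - d + 1)" using leaf_add_caret(4)[OF Tp k d, of i] 3 by (simp add: Tp'_def n_def)
        show "fs' i = fs (i - d + 1)" using 3 d by (auto simp: fs'_def)
        show "\<sigma>' i = (if \<sigma> (i - d + 1) < p then \<sigma> (i - d + 1) else \<sigma> (i - d + 1) + d - 1)"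
          using V(3)[of i] 3 by (simp add: p_def)
      qed
    next
      case 2
      define x where "x = i - k + 1"
      have x: "x \<in> {1..d}" using 2 d by (auto simp: x_def)
      have ix: "i = k + x - 1" using 2 by (simp add: x_def)
      have rx: "\<rho> x \<in> {1..d}" using permutes_in[OF \<rho> x] .
      have lTp': "leaf d Tp' i = leaf d Tp k @ [x]"
        using leaf_add_caret(3)[OF Tp k d, of i] 2 by (simp add: Tp'_def x_def)
      have fi: "fs' i = aut_state (fs k) x" using 2 by (simp add: fs'_def x_def)
      have si: "\<sigma>' i = p + \<rho> x - 1" using V(2)[OF x] ix by (simp add: p_def)
      have lTm': "leaf d Tm' (\<sigma>' i) = leaf d Tm p @ [\<rho> x]"
      proof -
        have "p \<le> p + \<rho> x - 1" "p + \<rho> x - 1 \<le> p + d - 1" "p + \<rho> x - 1 - p + 1 = \<rho> x" using rx pn by auto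
        then show ?thesis using leaf_add_caret(3)[OF Tm pn d, of "p + \<rho> x - 1"] si by (simp add: Tm'_def)
      qed
      have "aa d (Tm, (\<sigma>, fs), Tp) (conc (leaf d Tp' i) w)
          = aa d (Tm, (\<sigma>, fs), Tp) (conc (leaf d Tp k) (conc [x] w))"
        using lTp' by (simp add: conc_append)
      also have "\<dots> = conc (leaf d Tm p) (aut_bd (fs k) (conc [x] w))"
        using aa_conc[OF Tp k conc_boundary[OF _ w]] x by (simp add: p_def)
      also have "\<dots> = conc (leaf d Tm p @ [\<rho> x]) (aut_bd (aut_state (fs k) x) w)"
        using aut_bd_Cons[OF fk x w] by (simp add: conc_append \<rho>_def)
      also have "\<dots> = aa d (Tm', (\<sigma>', fs'), Tp') (conc (leaf d Tp' i) w)"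
        using L lTm' fi by simp
      finally show ?thesis by simp
    qed
  qed
  show ?thesis using ok' aa' by simp
qed

lemma expansion_ok_aa:
  assumes e: "expansion d t t'" and d: "d \<ge> 1"
  shows "triple_ok d t \<and> triple_ok d t' \<and> aa d t' = aa d t"
proof -
  obtain Tm \<sigma> fs Tp where t: "t = (Tm, (\<sigma>, fs), Tp)" by (cases t) auto
  have ok: "triple_ok d t" using e by (simp add: expansion_def)
  obtain k where k: "k \<in> {1..nleaves d Tp}"
    and t': "t' = (add_caret d Tm (leaf d Tm (\<sigma> k)), kappa d (nleaves d Tp) k (\<sigma>, fs), add_caret d Tp (leaf d Tp k))"
    using e unfolding expansion_def t by auto
  show ?thesis using expansion_step[OF ok[unfolded t] d k] ok t t' by simp
qed

lemma equivclp_ok_aa: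
  assumes "equivclp (expansion d) t t'" and d: "d \<ge> 1" and ok: "triple_ok d t"
  shows "triple_ok d t' \<and> aa d t' = aa d t"
  using assms(1)
proof (induction rule: equivclp_induct)
  case base then show ?case using ok by simp
next
  case (step y z)
  then show ?case using expansion_ok_aa[OF _ d] by (metis sympD symp_on_symclp symclp_def sup2E conversep_iff)
qed

section \<open>Common refinements\<close>

lemma cs_union:
  assumes T: "complete_subtree d T" and U: "complete_subtree d U"
  shows "complete_subtree d (T \<union> U)"
proof -
  have fin: "finite (T \<union> U)" using cs_finite[OF T] cs_finite[OF U] by simp
  have nil: "[] \<in> T \<union> U" using cs_Nil[OF T] by simp
  have sub: "T \<union> U \<subseteq> words d" using cs_words[OF T] cs_words[OF U] by blast
  have par: "\<forall>u x. u @ [x] \<in> T \<union> U \<longrightarrow> u \<in> T \<union> U" using cs_parent[OF T] cs_parent[OF U] by blast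
  have ch: "\<forall>u\<in>T \<union> U. (\<forall>x\<in>{1..d}. u @ [x] \<notin> T \<union> U) \<or> (\<forall>x\<in>{1..d}. u @ [x] \<in> T \<union> U)"
  proof
    fix u assume "u \<in> T \<union> U"
    show "(\<forall>x\<in>{1..d}. u @ [x] \<notin> T \<union> U) \<or> (\<forall>x\<in>{1..d}. u @ [x] \<in> T \<union> U)"
    proof (cases "\<exists>x. u @ [x] \<in> T \<union> U")
      case True
      then obtain x where "u @ [x] \<in> T \<or> u @ [x] \<in> U" by blast
      then show ?thesis using cs_children[OF T, of u x] cs_children[OF U, of u x] by blast
    next
      case False then show ?thesis by blast
    qed
  qed
  show ?thesis unfolding complete_subtree_def using fin nil sub par ch by blast
qed

lemma leaf_child_notin:
  assumes T: "complete_subtree d T" and l: "l \<in> leaves d T"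
  shows "l @ [x] \<notin> T"
proof
  assume "l @ [x] \<in> T" then have "[x] = []" using leaf_ext[OF T l] by blast
  then show False by simp
qed

lemma refine_step:
  assumes T: "complete_subtree d T" and S: "complete_subtree d S" and TS: "T \<subseteq> S" and ne: "T \<noteq> S"
  shows "\<exists>l\<in>leaves d T. add_caret d T l \<subseteq> S"
proof -
  have "\<exists>u. u \<in> S - T" using TS ne by blast
  then obtain u where u: "u \<in> S - T" and umin: "\<And>v. v \<in> S - T \<Longrightarrow> length u \<le> length v"
    using ex_has_least_nat[of "\<lambda>u. u \<in> S - T" _ length] by metis
  have "u \<noteq> []" using u cs_Nil[OF T] by auto
  then obtain q x where ux: "u = q @ [x]" by (metis rev_exhaust)
  have qS: "q \<in> S" using cs_parent[OF S] u ux by blast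
  have qT: "q \<in> T"
  proof (rule ccontr)
    assume "q \<notin> T" then have "length u \<le> length q" using umin qS by blast
    then show False using ux by simp
  qed
  have "q @ [x] \<in> words d" using cs_words[OF S] u ux by blast
  then have x: "x \<in> {1..d}" by simp
  have ql: "q \<in> leaves d T"
  proof -
    have "\<not> (\<forall>y\<in>{1..d}. q @ [y] \<in> T)" using u ux x by blast
    then have "\<forall>y\<in>{1..d}. q @ [y] \<notin> T" using T qT unfolding complete_subtree_def by blast
    then show ?thesis using qT by (simp add: leaves_def)
  qed
  have "\<forall>y\<in>{1..d}. q @ [y] \<in> S" using cs_children[OF S, of q x] u ux by blast
  then have "add_caret d T q \<subseteq> S" using TS by (auto simp: add_caret_def)
  then show ?thesis using ql by blast
qed

lemma card_add_caret_less:
  assumes T: "complete_subtree d T" and S: "complete_subtree d S" and l: "l \<in> leaves d T"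
    and sub: "add_caret d T l \<subseteq> S" and d: "d \<ge> 1"
  shows "card (S - add_caret d T l) < card (S - T)"
proof (rule psubset_card_mono)
  show "finite (S - T)" using cs_finite[OF S] by simp
  have "l @ [1] \<in> add_caret d T l" using d by (auto simp: add_caret_def)
  moreover have "l @ [1] \<notin> T" using leaf_child_notin[OF T l] .
  ultimately show "S - add_caret d T l \<subset> S - T" using sub by (auto simp: add_caret_def)
qed

lemma reach_right:
  assumes S: "complete_subtree d S" and d: "d \<ge> 1"
  shows "triple_ok d (Tm, g, Tp) \<Longrightarrow> Tp \<subseteq> S \<Longrightarrow> \<exists>Tm' g'. (expansion d)\<^sup>*\<^sup>* (Tm, g, Tp) (Tm', g', S)"
proof (induction "card (S - Tp)" arbitrary: Tm g Tp rule: less_induct)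
  case less
  show ?case
  proof (cases "Tp = S")
    case True then show ?thesis by blast
  next
    case False
    obtain \<sigma> fs where g: "g = (\<sigma>, fs)" by (cases g) auto
    note O = triple_okD[OF less.prems(1)[unfolded g]]
    obtain l where l: "l \<in> leaves d Tp" "add_caret d Tp l \<subseteq> S" using refine_step[OF O(2) S less.prems(2) False] by blast
    obtain k where k: "k \<in> {1..nleaves d Tp}" "leaf d Tp k = l" using leaf_surj[OF O(2) l(1)] by blast
    define t1 where "t1 = (add_caret d Tm (leaf d Tm (\<sigma> k)), kappa d (nleaves d Tp) k (\<sigma>, fs), add_caret d Tp (leaf d Tp k))"
    have e: "expansion d (Tm, g, Tp) t1" unfolding expansion_def t1_def using less.prems(1) k(1) g by auto
    have ok1: "triple_ok d t1" using expansion_ok_aa[OF e d] by simp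
    have "card (S - add_caret d Tp l) < card (S - Tp)" using card_add_caret_less[OF O(2) S l(1) l(2) d] .
    then obtain Tm' g' where "(expansion d)\<^sup>*\<^sup>* t1 (Tm', g', S)"
      using less.hyps[of "add_caret d Tp l" "add_caret d Tm (leaf d Tm (\<sigma> k))" "kappa d (nleaves d Tp) k (\<sigma>, fs)"]
        ok1 l(2) k(2) unfolding t1_def by blast
    then show ?thesis using e by (meson converse_rtranclp_into_rtranclp)
  qed
qed

lemma reach_left:
  assumes S: "complete_subtree d S" and d: "d \<ge> 1"
  shows "triple_ok d (Tm, g, Tp) \<Longrightarrow> Tm \<subseteq> S \<Longrightarrow> \<exists>g' Tp'. (expansion d)\<^sup>*\<^sup>* (Tm, g, Tp) (S, g', Tp')"
proof (induction "card (S - Tm)" arbitrary: Tm g Tp rule: less_induct)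
  case less
  show ?case
  proof (cases "Tm = S")
    case True then show ?thesis by blast
  next
    case False
    obtain \<sigma> fs where g: "g = (\<sigma>, fs)" by (cases g) auto
    note O = triple_okD[OF less.prems(1)[unfolded g]]
    obtain l where l: "l \<in> leaves d Tm" "add_caret d Tm l \<subseteq> S" using refine_step[OF O(1) S less.prems(2) False] by blast
    obtain p where p: "p \<in> {1..nleaves d Tm}" "leaf d Tm p = l" using leaf_surj[OF O(1) l(1)] by blast
    have pn: "p \<in> {1..nleaves d Tp}" using p O(3) by simp
    obtain k where k: "k \<in> {1..nleaves d Tp}" "\<sigma> k = p"
      using O(4) pn by (metis permutes_inverses(1) permutes_in permutes_inv)
    define t1 where "t1 = (add_caret d Tm (leaf d Tm (\<sigma> k)), kappa d (nleaves d Tp) k (\<sigma>, fs), add_caret d Tp (leaf d Tp k))"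
    have e: "expansion d (Tm, g, Tp) t1" unfolding expansion_def t1_def using less.prems(1) k(1) g by auto
    have ok1: "triple_ok d t1" using expansion_ok_aa[OF e d] by simp
    have "card (S - add_caret d Tm l) < card (S - Tm)" using card_add_caret_less[OF O(1) S l(1) l(2) d] .
    then obtain g' Tp' where "(expansion d)\<^sup>*\<^sup>* t1 (S, g', Tp')"
      using less.hyps[of "add_caret d Tm l" "kappa d (nleaves d Tp) k (\<sigma>, fs)" "add_caret d Tp (leaf d Tp k)"]
        ok1 l(2) k(2) p(2) unfolding t1_def by blast
    then show ?thesis using e by (meson converse_rtranclp_into_rtranclp)
  qed
qed


section \<open>Injectivity\<close>

lemma below_leaf:
  assumes T: "complete_subtree d T" and d: "d \<ge> 1"
  shows "u \<in> T \<Longrightarrow> \<exists>v. u @ v \<in> leaves d T"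
proof -
  obtain B where B: "\<forall>u\<in>T. length u < B"
    using cs_finite[OF T] by (metis finite_nat_set_iff_bounded imageI finite_imageI)
  have "\<forall>u. u \<in> T \<longrightarrow> B - length u = m \<longrightarrow> (\<exists>v. u @ v \<in> leaves d T)" for m
  proof (induction m rule: less_induct)
    case (less m)
    show ?case
    proof (intro allI impI)
      fix u assume u: "u \<in> T" and m: "B - length u = m"
      show "\<exists>v. u @ v \<in> leaves d T"
      proof (cases "u \<in> leaves d T")
        case True then show ?thesis by (metis append_Nil2)
      next
        case False
        then obtain x where x: "x \<in> {1..d}" "u @ [x] \<in> T" using u by (auto simp: leaves_def)
        have "length (u @ [x]) < B" using B x(2) by blast
        then have "B - length (u @ [x]) < m" using m by simp
        then obtain v where "u @ [x] @ v \<in> leaves d T" using less.IH x(2) by fastforce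
        then show ?thesis by blast
      qed
    qed
  qed
  then show "u \<in> T \<Longrightarrow> \<exists>v. u @ v \<in> leaves d T" by blast
qed

lemma cs_eq_leaves:
  assumes T: "complete_subtree d T" and U: "complete_subtree d U" and d: "d \<ge> 1"
    and e: "leaves d T = leaves d U"
  shows "T = U"
proof -
  have *: "X \<subseteq> Y" if X: "complete_subtree d X" and Y: "complete_subtree d Y" and e: "leaves d X = leaves d Y" for X Y
  proof
    fix u assume "u \<in> X"
    then obtain v where "u @ v \<in> leaves d X" using below_leaf[OF X d] by blast
    then have "u @ v \<in> Y" using e leaves_sub by blast
    then show "u \<in> Y" using cs_prefix[OF Y] by blast
  qed
  show ?thesis using *[OF T U e] *[OF U T e[symmetric]] by blast
qed

lemma leaves_image:
  assumes T: "complete_subtree d T"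
  shows "leaves d T = leaf d T ` {1..nleaves d T}"
proof
  show "leaf d T ` {1..nleaves d T} \<subseteq> leaves d T" using leaf_in[OF T] by blast
  show "leaves d T \<subseteq> leaf d T ` {1..nleaves d T}"
  proof
    fix l assume "l \<in> leaves d T"
    then obtain i where "i \<in> {1..nleaves d T}" "leaf d T i = l" using leaf_surj[OF T] by blast
    then show "l \<in> leaf d T ` {1..nleaves d T}" by blast
  qed
qed

lemma aut_bd_zero:
  assumes f: "tree_aut d f" and w: "w \<in> boundary d"
  shows "aut_bd f w 0 = aut_rho d f (w 0)"
proof -
  have "w 0 \<in> {1..d}" using w by (simp add: boundary_def)
  then show ?thesis using tree_aut_single(1)[OF f] by (simp add: aut_bd_def)
qed

lemma conc_eq_prefix:
  assumes d: "d \<ge> 2" and f: "tree_aut d f" and f': "tree_aut d f'"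
    and eq: "\<And>w. w \<in> boundary d \<Longrightarrow> conc u (aut_bd f w) = conc u' (aut_bd f' w)"
  shows "u = u'"
proof -
  have nolt: "False" if lt: "length a < length b" and g: "tree_aut d g"
    and e: "\<And>w. w \<in> boundary d \<Longrightarrow> conc a (aut_bd g w) = conc b (aut_bd g' w)" for a b g g'
  proof -
    have w1: "(\<lambda>_. 1) \<in> boundary d" and w2: "(\<lambda>_. 2) \<in> boundary d" using d by (auto simp: boundary_def)
    have "conc a (aut_bd g (\<lambda>_. 1)) (length a) = conc b (aut_bd g' (\<lambda>_. 1)) (length a)" using e[OF w1] by simp
    then have 1: "aut_rho d g 1 = b ! length a" using lt aut_bd_zero[OF g w1] by (simp add: conc_def)
    have "conc a (aut_bd g (\<lambda>_. 2)) (length a) = conc b (aut_bd g' (\<lambda>_. 2)) (length a)" using e[OF w2] by simp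
    then have 2: "aut_rho d g 2 = b ! length a" using lt aut_bd_zero[OF g w2] by (simp add: conc_def)
    have "(1::nat) = 2" using aut_rho_inj[OF g, of 1 2] 1 2 d by simp
    then show False by simp
  qed
  have len: "length u = length u'"
    using nolt[of u u' f f'] nolt[of u' u f' f] eq f f' by (metis linorder_neqE_nat)
  show ?thesis
  proof (rule nth_equalityI)
    show "length u = length u'" by (fact len)
    fix i assume i: "i < length u"
    have w: "(\<lambda>_. 1) \<in> boundary d" using d by (simp add: boundary_def)
    have "conc u (aut_bd f (\<lambda>_. 1)) i = conc u' (aut_bd f' (\<lambda>_. 1)) i" using eq[OF w] by simp
    then show "u ! i = u' ! i" using i len by (simp add: conc_def)
  qed
qed

lemma aa_inj_same:
  assumes d: "d \<ge> 2"
    and ok: "triple_ok d (Tm, (\<sigma>, fs), Tp)" and ok': "triple_ok d (Tm', (\<sigma>', fs'), Tp)"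
    and e: "aa d (Tm, (\<sigma>, fs), Tp) = aa d (Tm', (\<sigma>', fs'), Tp)"
  shows "Tm = Tm' \<and> \<sigma> = \<sigma>' \<and> fs = fs'"
proof -
  note O = triple_okD[OF ok] and O' = triple_okD[OF ok']
  define n where "n = nleaves d Tp"
  have d1: "d \<ge> 1" using d by simp
  have key: "leaf d Tm (\<sigma> i) = leaf d Tm' (\<sigma>' i) \<and> fs i = fs' i" if i: "i \<in> {1..n}" for i
  proof -
    have i': "i \<in> {1..nleaves d Tp}" using i by (simp add: n_def)
    have eqw: "conc (leaf d Tm (\<sigma> i)) (aut_bd (fs i) w) = conc (leaf d Tm' (\<sigma>' i)) (aut_bd (fs' i) w)"
      if w: "w \<in> boundary d" for w
      using aa_conc[OF O(2) i' w, of Tm \<sigma> fs] aa_conc[OF O(2) i' w, of Tm' \<sigma>' fs'] e by simp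
    have u: "leaf d Tm (\<sigma> i) = leaf d Tm' (\<sigma>' i)"
      using conc_eq_prefix[OF d O(5)[OF i'] O'(5)[OF i'] eqw] .
    have "aut_bd (fs i) w = aut_bd (fs' i) w" if w: "w \<in> boundary d" for w
      using arg_cong[OF eqw[OF w], of "sdrop (length (leaf d Tm (\<sigma> i)))"] u by (simp add: sdrop_conc)
    then have "fs i = fs' i" using aut_bd_determines[OF O(5)[OF i'] O'(5)[OF i'] d1] by blast
    then show ?thesis using u by simp
  qed
  have fs: "fs = fs'"
  proof
    fix i show "fs i = fs' i"
      using key[of i] O(6)[of i] O'(6)[of i] by (cases "i \<in> {1..n}") (auto simp: n_def)
  qed
  have \<sigma>n: "\<sigma> permutes {1..n}" "\<sigma>' permutes {1..n}" using O(4) O'(4) by (simp_all add: n_def)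
  have "leaves d Tm = leaf d Tm ` {1..n}" using leaves_image[OF O(1)] O(3) by (simp add: n_def)
  also have "\<dots> = leaf d Tm ` \<sigma> ` {1..n}" using permutes_image[OF \<sigma>n(1)] by simp
  also have "\<dots> = leaf d Tm' ` \<sigma>' ` {1..n}"
  proof -
    have "leaf d Tm ` \<sigma> ` {1..n} = (\<lambda>i. leaf d Tm (\<sigma> i)) ` {1..n}" by (simp add: image_image)
    also have "\<dots> = (\<lambda>i. leaf d Tm' (\<sigma>' i)) ` {1..n}" using key by (intro image_cong) auto
    also have "\<dots> = leaf d Tm' ` \<sigma>' ` {1..n}" by (simp add: image_image)
    finally show ?thesis .
  qed
  also have "\<dots> = leaf d Tm' ` {1..n}" using permutes_image[OF \<sigma>n(2)] by simp
  also have "\<dots> = leaves d Tm'" using leaves_image[OF O'(1)] O'(3) by (simp add: n_def)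
  finally have TT: "Tm = Tm'" using cs_eq_leaves[OF O(1) O'(1) d1] by simp
  have "\<sigma> i = \<sigma>' i" for i
  proof (cases "i \<in> {1..n}")
    case True
    have "\<sigma> i \<in> {1..nleaves d Tm}" "\<sigma>' i \<in> {1..nleaves d Tm}"
      using permutes_in[OF \<sigma>n(1) True] permutes_in[OF \<sigma>n(2) True] O(3) by (simp_all add: n_def)
    then show ?thesis using leaf_inj[OF O(1)] key[OF True] TT by metis
  next
    case False then show ?thesis using \<sigma>n by (simp add: permutes_def)
  qed
  then show ?thesis using TT fs by auto
qed

lemma aa_eq_equivclp:
  assumes d: "d \<ge> 2" and ok: "triple_ok d t" and ok': "triple_ok d t'" and e: "aa d t = aa d t'"
  shows "equivclp (expansion d) t t'"
proof -
  have d1: "d \<ge> 1" using d by simp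
  obtain Tm g Tp where t: "t = (Tm, g, Tp)" by (cases t) auto
  obtain Tm2 g2 Tp2 where t': "t' = (Tm2, g2, Tp2)" by (cases t') auto
  let ?S = "Tp \<union> Tp2"
  have S: "complete_subtree d ?S"
    using cs_union triple_okD(2) ok ok' t t' by (metis prod.collapse)
  obtain A h1 where r1: "(expansion d)\<^sup>*\<^sup>* t (A, h1, ?S)" using reach_right[OF S d1, of Tm g Tp] ok t by auto
  obtain B h2 where r2: "(expansion d)\<^sup>*\<^sup>* t' (B, h2, ?S)" using reach_right[OF S d1, of Tm2 g2 Tp2] ok' t' by auto
  have q1: "equivclp (expansion d) t (A, h1, ?S)" using rtranclp_into_equivclp[OF r1] .
  have q2: "equivclp (expansion d) t' (B, h2, ?S)" using rtranclp_into_equivclp[OF r2] .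
  have o1: "triple_ok d (A, h1, ?S) \<and> aa d (A, h1, ?S) = aa d t" using equivclp_ok_aa[OF q1 d1 ok] .
  have o2: "triple_ok d (B, h2, ?S) \<and> aa d (B, h2, ?S) = aa d t'" using equivclp_ok_aa[OF q2 d1 ok'] .
  obtain \<sigma>1 f1 where h1: "h1 = (\<sigma>1, f1)" by (cases h1) auto
  obtain \<sigma>2 f2 where h2: "h2 = (\<sigma>2, f2)" by (cases h2) auto
  have "A = B \<and> \<sigma>1 = \<sigma>2 \<and> f1 = f2" using aa_inj_same[OF d, of A \<sigma>1 f1 ?S B \<sigma>2 f2] o1 o2 e h1 h2 by simp
  then have "(A, h1, ?S) = (B, h2, ?S)" using h1 h2 by simp
  then show ?thesis using q1 q2 by (metis equivclp_sym equivclp_trans)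
qed

lemma wr_mult_ok_aa:
  assumes ok1: "triple_ok d (Tm, (\<sigma>, f), T)" and ok2: "triple_ok d (T, (\<tau>, g), Tp)"
  shows "triple_ok d (Tm, wr_mult (nleaves d T) (\<sigma>, f) (\<tau>, g), Tp)
    \<and> aa d (Tm, wr_mult (nleaves d T) (\<sigma>, f) (\<tau>, g), Tp) = aa d (Tm, (\<sigma>, f), T) \<circ> aa d (T, (\<tau>, g), Tp)"
proof -
  note O1 = triple_okD[OF ok1] and O2 = triple_okD[OF ok2]
  define n where "n = nleaves d T"
  have nTp: "nleaves d Tp = n" using O2(3) by (simp add: n_def)
  define h where "h = (\<lambda>i. if i \<in> {1..n} then f (\<tau> i) \<circ> g i else id)"
  have w: "wr_mult (nleaves d T) (\<sigma>, f) (\<tau>, g) = (\<sigma> \<circ> \<tau>, h)" by (simp add: wr_mult_def h_def n_def)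
  have \<tau>: "\<tau> permutes {1..n}" using O2(4) nTp by simp
  have \<sigma>: "\<sigma> permutes {1..n}" using O1(4) by (simp add: n_def)
  have st: "\<sigma> \<circ> \<tau> permutes {1..nleaves d Tp}" using permutes_compose[OF \<tau> \<sigma>] nTp by simp
  have haut: "tree_aut d (h i)" if "i \<in> {1..nleaves d Tp}" for i
  proof -
    have i: "i \<in> {1..n}" using that nTp by simp
    have "\<tau> i \<in> {1..nleaves d T}" using permutes_in[OF \<tau> i] by (simp add: n_def)
    then show ?thesis using tree_aut_comp[OF O1(5) O2(5)[OF that]] i by (simp add: h_def)
  qed
  have hout: "h i = id" if "i \<notin> {1..nleaves d Tp}" for i using that nTp unfolding h_def by auto
  have ok: "triple_ok d (Tm, (\<sigma> \<circ> \<tau>, h), Tp)"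
    unfolding triple_ok_def using O1(1) O2(2) O1(3) nTp st haut hout by (simp add: n_def)
  have aa: "aa d (Tm, (\<sigma> \<circ> \<tau>, h), Tp) = aa d (Tm, (\<sigma>, f), T) \<circ> aa d (T, (\<tau>, g), Tp)"
  proof
    fix \<xi>
    show "aa d (Tm, (\<sigma> \<circ> \<tau>, h), Tp) \<xi> = (aa d (Tm, (\<sigma>, f), T) \<circ> aa d (T, (\<tau>, g), Tp)) \<xi>"
    proof (cases "\<xi> \<in> boundary d")
      case False then show ?thesis by (simp add: aa_out)
    next
      case True
      then obtain i w where i: "i \<in> {1..nleaves d Tp}" and w: "w \<in> boundary d" and xi: "\<xi> = conc (leaf d Tp i) w"
        using boundary_decomp[OF O2(2)] by blast
      have i': "i \<in> {1..n}" using i nTp by simp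
      have ti: "\<tau> i \<in> {1..nleaves d T}" using permutes_in[OF \<tau> i'] by (simp add: n_def)
      have gw: "aut_bd (g i) w \<in> boundary d" using aut_bd_boundary[OF O2(5)[OF i] w] .
      have "(aa d (Tm, (\<sigma>, f), T) \<circ> aa d (T, (\<tau>, g), Tp)) \<xi>
          = aa d (Tm, (\<sigma>, f), T) (conc (leaf d T (\<tau> i)) (aut_bd (g i) w))"
        using aa_conc[OF O2(2) i w] xi by simp
      also have "\<dots> = conc (leaf d Tm (\<sigma> (\<tau> i))) (aut_bd (f (\<tau> i)) (aut_bd (g i) w))"
        using aa_conc[OF O1(2) ti gw] .
      also have "\<dots> = conc (leaf d Tm (\<sigma> (\<tau> i))) (aut_bd (h i) w)"
        using aut_bd_comp[OF O1(5)[OF ti] O2(5)[OF i] w] i' by (simp add: h_def)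
      also have "\<dots> = aa d (Tm, (\<sigma> \<circ> \<tau>, h), Tp) \<xi>" using aa_conc[OF O2(2) i w] xi by simp
      finally show ?thesis by simp
    qed
  qed
  show ?thesis using ok aa w by simp
qed

lemma aa_ident:
  assumes T: "complete_subtree d T"
  shows "aa d (T, (id, \<lambda>i. id), T) = id"
proof
  fix \<xi>
  show "aa d (T, (id, \<lambda>i. id), T) \<xi> = id \<xi>"
  proof (cases "\<xi> \<in> boundary d")
    case False then show ?thesis by (simp add: aa_out)
  next
    case True
    then obtain i w where i: "i \<in> {1..nleaves d T}" and w: "w \<in> boundary d" and xi: "\<xi> = conc (leaf d T i) w"
      using boundary_decomp[OF T] by blast
    show ?thesis using aa_conc[OF T i w, of T id "\<lambda>i. id"] xi by (simp add: aut_bd_id)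
  qed
qed

lemma cs_root: "complete_subtree d {[]}"
  by (simp add: complete_subtree_def)

lemma leaves_root: "leaves d {[]} = {[]}"
  by (auto simp: leaves_def)

lemma nleaves_root: "nleaves d {[]} = 1"
  by (simp add: nleaves_def leaves_root)

lemma ok_root: "triple_ok d ({[]}, (id, \<lambda>i. id), {[]})"
  unfolding triple_ok_def using cs_root nleaves_root tree_aut_id by (simp add: permutes_id)

lemma inverse_triple:
  assumes ok: "triple_ok d (Tm, (\<sigma>, f), Tp)"
  shows "\<exists>t'. triple_ok d t' \<and> aa d t' \<circ> aa d (Tm, (\<sigma>, f), Tp) = id"
proof -
  note O = triple_okD[OF ok]
  define n where "n = nleaves d Tp"
  have \<sigma>: "\<sigma> permutes {1..n}" using O(4) by (simp add: n_def)
  define h where "h = (\<lambda>i. if i \<in> {1..n} then finv d (f (inv_into UNIV \<sigma> i)) else id)"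
  have \<sigma>i: "inv_into UNIV \<sigma> permutes {1..n}" using permutes_inv[OF \<sigma>] .
  have ok': "triple_ok d (Tp, (inv_into UNIV \<sigma>, h), Tm)"
    unfolding triple_ok_def prod.case
  proof (intro conjI ballI allI impI)
    show "complete_subtree d Tp" "complete_subtree d Tm" using O by auto
    show "nleaves d Tp = nleaves d Tm" using O(3) by simp
    show "inv_into UNIV \<sigma> permutes {1..nleaves d Tm}" using \<sigma>i O(3) by (simp add: n_def)
    show "tree_aut d (h i)" if "i \<in> {1..nleaves d Tm}" for i
    proof -
      have i: "i \<in> {1..n}" using that O(3) by (simp add: n_def)
      have "inv_into UNIV \<sigma> i \<in> {1..nleaves d Tp}" using permutes_in[OF \<sigma>i i] by (simp add: n_def)
      then show ?thesis using tree_aut_finv[OF O(5)] i by (simp add: h_def)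
    qed
    show "h i = id" if "i \<notin> {1..nleaves d Tm}" for i using that O(3) unfolding h_def n_def by auto
  qed
  have prod: "triple_ok d (Tp, wr_mult (nleaves d Tm) (inv_into UNIV \<sigma>, h) (\<sigma>, f), Tp)
    \<and> aa d (Tp, wr_mult (nleaves d Tm) (inv_into UNIV \<sigma>, h) (\<sigma>, f), Tp) = aa d (Tp, (inv_into UNIV \<sigma>, h), Tm) \<circ> aa d (Tm, (\<sigma>, f), Tp)"
    using wr_mult_ok_aa[OF ok' ok] .
  have "wr_mult (nleaves d Tm) (inv_into UNIV \<sigma>, h) (\<sigma>, f) = (id, \<lambda>i. id)"
  proof -
    have "inv_into UNIV \<sigma> \<circ> \<sigma> = id" using permutes_inv_o(2)[OF \<sigma>] .
    moreover have "(\<lambda>i. if i \<in> {1..nleaves d Tm} then h (\<sigma> i) \<circ> f i else id) = (\<lambda>i. id)"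
    proof
      fix i show "(if i \<in> {1..nleaves d Tm} then h (\<sigma> i) \<circ> f i else id) = id"
      proof (cases "i \<in> {1..nleaves d Tm}")
        case True
        then have i: "i \<in> {1..n}" using O(3) by (simp add: n_def)
        have "h (\<sigma> i) = finv d (f i)" using permutes_in[OF \<sigma> i] permutes_inverses(2)[OF \<sigma>] by (simp add: h_def)
        then show ?thesis using True finv_comp[OF O(5)] i by (simp add: n_def)
      next
        case False then show ?thesis by (rule if_not_P)
      qed
    qed
    ultimately show ?thesis by (simp add: wr_mult_def)
  qed
  then have "aa d (Tp, (inv_into UNIV \<sigma>, h), Tm) \<circ> aa d (Tm, (\<sigma>, f), Tp) = id"
    using prod aa_ident[OF O(2)] by simp
  then show ?thesis using ok' by blast
qed

lemma tclass_refl: "t \<in> tclass d t" by (simp add: tclass_def)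

lemma tclass_mem:
  assumes d: "d \<ge> 1" and ok: "triple_ok d t" and m: "t' \<in> tclass d t"
  shows "triple_ok d t' \<and> aa d t' = aa d t"
proof -
  have "equivclp (expansion d) t t'" using m by (simp add: tclass_def)
  then show ?thesis by (rule equivclp_ok_aa[OF _ d ok])
qed

lemma tclass_eqI:
  assumes "equivclp (expansion d) t t'"
  shows "tclass d t = tclass d t'"
proof -
  have "equivclp (expansion d) t s \<longleftrightarrow> equivclp (expansion d) t' s" for s
    using assms equivclp_sym[OF assms] equivclp_trans by metis
  then show ?thesis unfolding tclass_def by blast
qed

lemma tclass_eq_iff:
  assumes d: "d \<ge> 2" and ok: "triple_ok d t" and ok': "triple_ok d t'"
  shows "tclass d t = tclass d t' \<longleftrightarrow> aa d t = aa d t'"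
proof
  assume "tclass d t = tclass d t'"
  then have "t' \<in> tclass d t" using tclass_refl by metis
  then show "aa d t = aa d t'" using tclass_mem[OF _ ok] d by simp
next
  assume "aa d t = aa d t'"
  then show "tclass d t = tclass d t'" using tclass_eqI aa_eq_equivclp[OF d ok ok'] by blast
qed

lemma Phi_tclass:
  assumes d: "d \<ge> 1" and ok: "triple_ok d t"
  shows "aa d (SOME s. s \<in> tclass d t) = aa d t"
proof -
  have "(SOME s. s \<in> tclass d t) \<in> tclass d t" using someI[of "\<lambda>s. s \<in> tclass d t" t] tclass_refl by metis
  then show ?thesis using tclass_mem[OF d ok] by blast
qed

lemma common_middle:
  assumes d: "d \<ge> 1" and ok1: "triple_ok d t1" and ok2: "triple_ok d t2"
  shows "\<exists>Tm f T g Tp. (Tm, f, T) \<in> tclass d t1 \<and> (T, g, Tp) \<in> tclass d t2"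
proof -
  obtain A g1 B where t1: "t1 = (A, g1, B)" by (cases t1) auto
  obtain C g2 E where t2: "t2 = (C, g2, E)" by (cases t2) auto
  have cB: "complete_subtree d B" and cC: "complete_subtree d C"
    using triple_okD ok1 ok2 t1 t2 by (metis prod.collapse)+
  let ?S = "B \<union> C"
  have S: "complete_subtree d ?S" using cs_union[OF cB cC] .
  obtain A' h1 where r1: "(expansion d)\<^sup>*\<^sup>* t1 (A', h1, ?S)" using reach_right[OF S d, of A g1 B] ok1 t1 by auto
  obtain h2 E' where r2: "(expansion d)\<^sup>*\<^sup>* t2 (?S, h2, E')" using reach_left[OF S d, of C g2 E] ok2 t2 by auto
  have "(A', h1, ?S) \<in> tclass d t1" "(?S, h2, E') \<in> tclass d t2"
    using rtranclp_into_equivclp[OF r1] rtranclp_into_equivclp[OF r2] by (simp_all add: tclass_def)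
  then show ?thesis by blast
qed

lemma prod_reps:
  assumes d: "d \<ge> 1" and ok1: "triple_ok d t1" and ok2: "triple_ok d t2"
    and m1: "(Tm, f, T) \<in> tclass d t1" and m2: "(T, g, Tp) \<in> tclass d t2"
  shows "triple_ok d (Tm, wr_mult (nleaves d T) f g, Tp) \<and> aa d (Tm, wr_mult (nleaves d T) f g, Tp) = aa d t1 \<circ> aa d t2"
proof -
  have a: "triple_ok d (Tm, f, T) \<and> aa d (Tm, f, T) = aa d t1" using tclass_mem[OF d ok1 m1] .
  have b: "triple_ok d (T, g, Tp) \<and> aa d (T, g, Tp) = aa d t2" using tclass_mem[OF d ok2 m2] .
  obtain \<sigma> fs where f: "f = (\<sigma>, fs)" by (cases f) auto
  obtain \<tau> gs where g: "g = (\<tau>, gs)" by (cases g) auto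
  show ?thesis using wr_mult_ok_aa[of d Tm \<sigma> fs T \<tau> gs Tp] a b f g by simp
qed

lemma tmult_char:
  assumes d: "d \<ge> 2" and ok1: "triple_ok d t1" and ok2: "triple_ok d t2"
    and m1: "(Tm, f, T) \<in> tclass d t1" and m2: "(T, g, Tp) \<in> tclass d t2"
  shows "tmult d (tclass d t1) (tclass d t2) = tclass d (Tm, wr_mult (nleaves d T) f g, Tp)"
proof -
  have d1: "d \<ge> 1" using d by simp
  let ?P = "\<lambda>Z. \<exists>Tm f T g Tp. (Tm, f, T) \<in> tclass d t1 \<and> (T, g, Tp) \<in> tclass d t2
       \<and> Z = tclass d (Tm, wr_mult (nleaves d T) f g, Tp)"
  have "?P (tclass d (Tm, wr_mult (nleaves d T) f g, Tp))" using m1 m2 by blast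
  then have "?P (SOME Z. ?P Z)" by (rule someI)
  then obtain Tm2 f2 T2 g2 Tp2 where n1: "(Tm2, f2, T2) \<in> tclass d t1" and n2: "(T2, g2, Tp2) \<in> tclass d t2"
    and Z: "(SOME Z. ?P Z) = tclass d (Tm2, wr_mult (nleaves d T2) f2 g2, Tp2)" by blast
  have p1: "triple_ok d (Tm, wr_mult (nleaves d T) f g, Tp) \<and> aa d (Tm, wr_mult (nleaves d T) f g, Tp) = aa d t1 \<circ> aa d t2"
    using prod_reps[OF d1 ok1 ok2 m1 m2] .
  have p2: "triple_ok d (Tm2, wr_mult (nleaves d T2) f2 g2, Tp2) \<and> aa d (Tm2, wr_mult (nleaves d T2) f2 g2, Tp2) = aa d t1 \<circ> aa d t2"
    using prod_reps[OF d1 ok1 ok2 n1 n2] .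
  have "tmult d (tclass d t1) (tclass d t2) = (SOME Z. ?P Z)" unfolding tmult_def by simp
  also have "\<dots> = tclass d (Tm, wr_mult (nleaves d T) f g, Tp)"
    using Z tclass_eq_iff[OF d] p1 p2 by simp
  finally show ?thesis .
qed

lemma tmult_ex:
  assumes d: "d \<ge> 2" and ok1: "triple_ok d t1" and ok2: "triple_ok d t2"
  shows "\<exists>p. triple_ok d p \<and> tmult d (tclass d t1) (tclass d t2) = tclass d p \<and> aa d p = aa d t1 \<circ> aa d t2"
proof -
  have d1: "d \<ge> 1" using d by simp
  obtain Tm f T g Tp where m1: "(Tm, f, T) \<in> tclass d t1" and m2: "(T, g, Tp) \<in> tclass d t2"
    using common_middle[OF d1 ok1 ok2] by blast
  show ?thesis using tmult_char[OF d ok1 ok2 m1 m2] prod_reps[OF d1 ok1 ok2 m1 m2] by blast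
qed

section \<open>Almost automorphisms\<close>

lemma aa_in_AAut: "triple_ok d t \<Longrightarrow> aa d t \<in> AAut d"
  unfolding AAut_def triple_ok_def by (cases t) auto

lemma AAut_ok:
  assumes F: "F \<in> AAut d"
  shows "\<exists>t. triple_ok d t \<and> aa d t = F"
proof -
  obtain Tm \<sigma> fs Tp where F: "F = aa d (Tm, (\<sigma>, fs), Tp)" and c: "complete_subtree d Tm" "complete_subtree d Tp"
    "nleaves d Tm = nleaves d Tp" "\<sigma> permutes {1..nleaves d Tp}" "\<forall>i\<in>{1..nleaves d Tp}. tree_aut d (fs i)"
    using F unfolding AAut_def by blast
  define fs' where "fs' = (\<lambda>i. if i \<in> {1..nleaves d Tp} then fs i else id)"
  have ok: "triple_ok d (Tm, (\<sigma>, fs'), Tp)" unfolding triple_ok_def fs'_def using c by auto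
  have "aa d (Tm, (\<sigma>, fs'), Tp) = aa d (Tm, (\<sigma>, fs), Tp)"
  proof (rule aa_ext[OF c(2)])
    fix i w assume i: "i \<in> {1..nleaves d Tp}" and w: "w \<in> boundary d"
    show "aa d (Tm, (\<sigma>, fs'), Tp) (conc (leaf d Tp i) w) = aa d (Tm, (\<sigma>, fs), Tp) (conc (leaf d Tp i) w)"
      using aa_conc[OF c(2) i w, of Tm \<sigma> fs'] aa_conc[OF c(2) i w, of Tm \<sigma> fs] i by (simp add: fs'_def)
  qed
  then show ?thesis using ok F by blast
qed

lemma AAut_comp:
  assumes d: "d \<ge> 1" and ok1: "triple_ok d t1" and ok2: "triple_ok d t2"
  shows "aa d t1 \<circ> aa d t2 \<in> AAut d"
proof -
  obtain Tm f T g Tp where m1: "(Tm, f, T) \<in> tclass d t1" and m2: "(T, g, Tp) \<in> tclass d t2"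
    using common_middle[OF d ok1 ok2] by blast
  show ?thesis using prod_reps[OF d ok1 ok2 m1 m2] aa_in_AAut by metis
qed

lemma id_in_AAut: "id \<in> AAut d"
  using aa_in_AAut[OF ok_root] aa_ident[OF cs_root] by metis

lemma group_AAutG:
  assumes d: "d \<ge> 1"
  shows "group (AAutG d)"
proof (rule groupI)
  show "x \<otimes>\<^bsub>AAutG d\<^esub> y \<in> carrier (AAutG d)" if "x \<in> carrier (AAutG d)" "y \<in> carrier (AAutG d)" for x y
    using that AAut_ok AAut_comp[OF d] by (simp add: AAutG_def) metis
  show "\<one>\<^bsub>AAutG d\<^esub> \<in> carrier (AAutG d)" using id_in_AAut by (simp add: AAutG_def)
  show "x \<otimes>\<^bsub>AAutG d\<^esub> y \<otimes>\<^bsub>AAutG d\<^esub> z = x \<otimes>\<^bsub>AAutG d\<^esub> (y \<otimes>\<^bsub>AAutG d\<^esub> z)" for x y z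
    by (simp add: AAutG_def o_assoc)
  show "\<one>\<^bsub>AAutG d\<^esub> \<otimes>\<^bsub>AAutG d\<^esub> x = x" for x by (simp add: AAutG_def)
  show "\<exists>y\<in>carrier (AAutG d). y \<otimes>\<^bsub>AAutG d\<^esub> x = \<one>\<^bsub>AAutG d\<^esub>" if xin: "x \<in> carrier (AAutG d)" for x
  proof -
    have "x \<in> AAut d" using xin by (simp add: AAutG_def)
    then obtain t where t: "triple_ok d t" "aa d t = x" using AAut_ok by blast
    obtain Tm \<sigma> f Tp where tt: "t = (Tm, (\<sigma>, f), Tp)" by (cases t) auto
    obtain t' where t': "triple_ok d t'" "aa d t' \<circ> aa d t = id" using inverse_triple[of d Tm \<sigma> f Tp] t tt by blast
    have "aa d t' \<in> AAut d" using aa_in_AAut[OF t'(1)] .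
    then show ?thesis using t t'(2) by (auto simp: AAutG_def)
  qed
qed

lemma Thompson_carrier: "carrier (Thompson d) = {tclass d t |t. triple_ok d t}"
  by (simp add: Thompson_def)

lemma Thompson_mult: "X \<otimes>\<^bsub>Thompson d\<^esub> Y = tmult d X Y"
  by (simp add: Thompson_def)

lemma Thompson_one: "\<one>\<^bsub>Thompson d\<^esub> = tclass d ({[]}, (id, \<lambda>i. id), {[]})"
  by (simp add: Thompson_def)

lemma group_Thompson:
  assumes d: "d \<ge> 2"
  shows "group (Thompson d)"
proof (rule groupI)
  have d1: "d \<ge> 1" using d by simp
  show "x \<otimes>\<^bsub>Thompson d\<^esub> y \<in> carrier (Thompson d)"
    if H: "x \<in> carrier (Thompson d)" "y \<in> carrier (Thompson d)" for x y
  proof -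
    obtain t1 t2 where tt: "x = tclass d t1" "triple_ok d t1" "y = tclass d t2" "triple_ok d t2"
      using H by (auto simp: Thompson_carrier)
    obtain p where p: "triple_ok d p" "tmult d x y = tclass d p"
      using tmult_ex[OF d tt(2) tt(4)] tt by blast
    show ?thesis unfolding Thompson_carrier Thompson_mult using p by blast
  qed
  show "\<one>\<^bsub>Thompson d\<^esub> \<in> carrier (Thompson d)"
    unfolding Thompson_carrier Thompson_one using ok_root by blast
  show "x \<otimes>\<^bsub>Thompson d\<^esub> y \<otimes>\<^bsub>Thompson d\<^esub> z = x \<otimes>\<^bsub>Thompson d\<^esub> (y \<otimes>\<^bsub>Thompson d\<^esub> z)"
    if H: "x \<in> carrier (Thompson d)" "y \<in> carrier (Thompson d)" "z \<in> carrier (Thompson d)" for x y z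
  proof -
    obtain t1 t2 t3 where t: "x = tclass d t1" "triple_ok d t1" "y = tclass d t2" "triple_ok d t2"
      "z = tclass d t3" "triple_ok d t3"
      using H by (auto simp: Thompson_carrier)
    obtain p where p: "triple_ok d p" "tmult d x y = tclass d p" "aa d p = aa d t1 \<circ> aa d t2"
      using tmult_ex[OF d t(2) t(4)] t by blast
    obtain q where q: "triple_ok d q" "tmult d (tclass d p) z = tclass d q" "aa d q = aa d p \<circ> aa d t3"
      using tmult_ex[OF d p(1) t(6)] t by blast
    obtain p' where p': "triple_ok d p'" "tmult d y z = tclass d p'" "aa d p' = aa d t2 \<circ> aa d t3"
      using tmult_ex[OF d t(4) t(6)] t by blast
    obtain q' where q': "triple_ok d q'" "tmult d x (tclass d p') = tclass d q'" "aa d q' = aa d t1 \<circ> aa d p'"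
      using tmult_ex[OF d t(2) p'(1)] t by blast
    have "tclass d q = tclass d q'" using tclass_eq_iff[OF d q(1) q'(1)] q(3) q'(3) p(3) p'(3) by (simp add: o_assoc)
    then show ?thesis using p q p' q' by (simp add: Thompson_mult)
  qed
  show "\<one>\<^bsub>Thompson d\<^esub> \<otimes>\<^bsub>Thompson d\<^esub> x = x" if H: "x \<in> carrier (Thompson d)" for x
  proof -
    obtain t where t: "x = tclass d t" "triple_ok d t" using H by (auto simp: Thompson_carrier)
    obtain q where q: "triple_ok d q" "tmult d (tclass d ({[]}, (id, \<lambda>i. id), {[]})) x = tclass d q"
      "aa d q = aa d ({[]}, (id, \<lambda>i. id), {[]}) \<circ> aa d t"
      using tmult_ex[OF d ok_root t(2)] t by blast
    have "aa d q = aa d t" using q(3) aa_ident[OF cs_root] by simp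
    then have "tclass d q = tclass d t" using tclass_eq_iff[OF d q(1) t(2)] by simp
    then show ?thesis using q t by (simp add: Thompson_mult Thompson_one)
  qed
  show "\<exists>y\<in>carrier (Thompson d). y \<otimes>\<^bsub>Thompson d\<^esub> x = \<one>\<^bsub>Thompson d\<^esub>" if H: "x \<in> carrier (Thompson d)" for x
  proof -
    obtain t where t: "x = tclass d t" "triple_ok d t" using H by (auto simp: Thompson_carrier)
    obtain Tm \<sigma> f Tp where tt: "t = (Tm, (\<sigma>, f), Tp)" by (cases t) auto
    obtain t' where t': "triple_ok d t'" "aa d t' \<circ> aa d t = id" using inverse_triple[of d Tm \<sigma> f Tp] t tt by blast
    obtain q where q: "triple_ok d q" "tmult d (tclass d t') x = tclass d q" "aa d q = aa d t' \<circ> aa d t"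
      using tmult_ex[OF d t'(1) t(2)] t by blast
    have "aa d q = aa d ({[]}, (id, \<lambda>i. id), {[]})" using q(3) t'(2) aa_ident[OF cs_root] by simp
    then have "tclass d q = tclass d ({[]}, (id, \<lambda>i. id), {[]})" using tclass_eq_iff[OF d q(1) ok_root] by simp
    moreover have "tclass d t' \<in> carrier (Thompson d)" unfolding Thompson_carrier using t'(1) by blast
    ultimately show ?thesis using q by (auto simp: Thompson_mult Thompson_one)
  qed
qed

theorem mainTheorem1:
  fixes d :: nat
  assumes "d \<ge> 2"
  shows "group (Thompson d)
    \<and> (\<forall>X\<in>carrier (Thompson d). \<forall>Y\<in>carrier (Thompson d).
          (\<exists>Tm f T g Tp. (Tm, f, T) \<in> X \<and> (T, g, Tp) \<in> Y)
        \<and> (\<forall>Tm f T g Tp. (Tm, f, T) \<in> X \<longrightarrow> (T, g, Tp) \<in> Y \<longrightarrow>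
             X \<otimes>\<^bsub>Thompson d\<^esub> Y = tclass d (Tm, wr_mult (nleaves d T) f g, Tp)))
    \<and> group (AAutG d)
    \<and> (\<forall>X\<in>carrier (Thompson d). \<forall>t\<in>X. \<forall>t'\<in>X. aa d t = aa d t')
    \<and> (\<lambda>X. aa d (SOME t. t \<in> X)) \<in> iso (Thompson d) (AAutG d)"
proof -
  have d: "d \<ge> 2" using assms .
  have d1: "d \<ge> 1" using d by simp
  have A: "group (Thompson d)" using group_Thompson[OF d] .
  have B: "\<forall>X\<in>carrier (Thompson d). \<forall>Y\<in>carrier (Thompson d).
          (\<exists>Tm f T g Tp. (Tm, f, T) \<in> X \<and> (T, g, Tp) \<in> Y)
        \<and> (\<forall>Tm f T g Tp. (Tm, f, T) \<in> X \<longrightarrow> (T, g, Tp) \<in> Y \<longrightarrow>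
             X \<otimes>\<^bsub>Thompson d\<^esub> Y = tclass d (Tm, wr_mult (nleaves d T) f g, Tp))"
  proof (intro ballI conjI allI impI)
    fix X Y assume X: "X \<in> carrier (Thompson d)" and Y: "Y \<in> carrier (Thompson d)"
    obtain t1 where t1: "X = tclass d t1" "triple_ok d t1" using X by (auto simp: Thompson_carrier)
    obtain t2 where t2: "Y = tclass d t2" "triple_ok d t2" using Y by (auto simp: Thompson_carrier)
    show "\<exists>Tm f T g Tp. (Tm, f, T) \<in> X \<and> (T, g, Tp) \<in> Y"
      using common_middle[OF d1 t1(2) t2(2)] t1 t2 by simp
    fix Tm f T g Tp assume "(Tm, f, T) \<in> X" "(T, g, Tp) \<in> Y"
    then show "X \<otimes>\<^bsub>Thompson d\<^esub> Y = tclass d (Tm, wr_mult (nleaves d T) f g, Tp)"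
      using tmult_char[OF d t1(2) t2(2)] t1 t2 by (simp add: Thompson_mult)
  qed
  have C: "group (AAutG d)" using group_AAutG[OF d1] .
  have D: "\<forall>X\<in>carrier (Thompson d). \<forall>t\<in>X. \<forall>t'\<in>X. aa d t = aa d t'"
  proof (intro ballI)
    fix X t t' assume X: "X \<in> carrier (Thompson d)" and t: "t \<in> X" and t': "t' \<in> X"
    obtain s where s: "X = tclass d s" "triple_ok d s" using X by (auto simp: Thompson_carrier)
    show "aa d t = aa d t'" using tclass_mem[OF d1 s(2)] t t' s(1) by metis
  qed
  let ?\<Phi> = "\<lambda>X. aa d (SOME t. t \<in> X)"
  have Phi: "?\<Phi> (tclass d t) = aa d t" if "triple_ok d t" for t using Phi_tclass[OF d1 that] .
  have hom: "?\<Phi> \<in> hom (Thompson d) (AAutG d)"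
  proof (rule homI)
    fix X assume "X \<in> carrier (Thompson d)"
    then obtain t where t: "X = tclass d t" "triple_ok d t" by (auto simp: Thompson_carrier)
    show "?\<Phi> X \<in> carrier (AAutG d)" using Phi[OF t(2)] aa_in_AAut[OF t(2)] t(1) by (simp add: AAutG_def)
  next
    fix X Y assume X: "X \<in> carrier (Thompson d)" and Y: "Y \<in> carrier (Thompson d)"
    obtain t1 where t1: "X = tclass d t1" "triple_ok d t1" using X by (auto simp: Thompson_carrier)
    obtain t2 where t2: "Y = tclass d t2" "triple_ok d t2" using Y by (auto simp: Thompson_carrier)
    obtain p where p: "triple_ok d p" "tmult d X Y = tclass d p" "aa d p = aa d t1 \<circ> aa d t2"
      using tmult_ex[OF d t1(2) t2(2)] t1 t2 by blast
    show "?\<Phi> (X \<otimes>\<^bsub>Thompson d\<^esub> Y) = ?\<Phi> X \<otimes>\<^bsub>AAutG d\<^esub> ?\<Phi> Y"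
      using Phi[OF p(1)] Phi[OF t1(2)] Phi[OF t2(2)] p t1 t2 by (simp add: Thompson_mult AAutG_def)
  qed
  have bij: "bij_betw ?\<Phi> (carrier (Thompson d)) (carrier (AAutG d))"
  proof (rule bij_betw_imageI)
    show "inj_on ?\<Phi> (carrier (Thompson d))"
    proof (rule inj_onI)
      fix X Y assume X: "X \<in> carrier (Thompson d)" and Y: "Y \<in> carrier (Thompson d)" and e: "?\<Phi> X = ?\<Phi> Y"
      obtain t1 where t1: "X = tclass d t1" "triple_ok d t1" using X by (auto simp: Thompson_carrier)
      obtain t2 where t2: "Y = tclass d t2" "triple_ok d t2" using Y by (auto simp: Thompson_carrier)
      show "X = Y" using e Phi[OF t1(2)] Phi[OF t2(2)] t1 t2 tclass_eq_iff[OF d t1(2) t2(2)] by simp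
    qed
    show "?\<Phi> ` carrier (Thompson d) = carrier (AAutG d)"
    proof
      show "?\<Phi> ` carrier (Thompson d) \<subseteq> carrier (AAutG d)" using hom by (auto simp: hom_def)
      show "carrier (AAutG d) \<subseteq> ?\<Phi> ` carrier (Thompson d)"
      proof
        fix F assume "F \<in> carrier (AAutG d)"
        then have "F \<in> AAut d" by (simp add: AAutG_def)
        then obtain t where t: "triple_ok d t" "aa d t = F" using AAut_ok by blast
        have "tclass d t \<in> carrier (Thompson d)" unfolding Thompson_carrier using t(1) by blast
        then show "F \<in> ?\<Phi> ` carrier (Thompson d)" using Phi[OF t(1)] t(2) by force
      qed
    qed
  qed
  have E: "?\<Phi> \<in> iso (Thompson d) (AAutG d)" using isoI[OF hom bij] .
  show ?thesis using A B C D E by blast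
qed

end
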